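(* Let $i\colon A\hookrightarrow X$ be an embedding and $f\colon A\to B$ a morphism in $\mathbf{MetCH_{sep}}$, and let $\iota_B\colon B\to B+X$, $\iota_X\colon X\to B+X$ be the coproduct injections. Define $\gamma\colon (B+X)\times(B+X)\to[0,\infty]$ by: (1) for $b,b'\in B$: $\gamma(\iota_B(b),\iota_B(b'))=d_B(b,b')$; (2) for $x,x'\in X$: $\gamma(\iota_X(x),\iota_X(x'))=\min\big\{d_X(x,x'),\ \inf_{a,a'\in A}\big(d_X(x,i(a))+d_B(f(a),f(a'))+d_X(i(a'),x')\big)\big\}$; (3) for $b\in B$, $x\in X$: $\gamma(\iota_B(b),\iota_X(x))=\inf_{a\in A}\big(d_B(b,f(a))+d_X(i(a),x)\big)$ and $\gamma(\iota_X(x),\iota_B(b))=\inf_{a\in A}\big(d_X(x,i(a))+d_B(f(a),b)\big)$. Then $\gamma$ is a continuous submetric on $B+X$. Moreover, the quotient $(B+X)/{\sim_\gamma}$, together with the maps $B\to(B+X)/{\sim_\gamma}$ and $X\to(B+X)/{\sim_\gamma}$ obtained by composing $\iota_B$ and $\iota_X$ with the projection, is the pushout of $B\xleftarrow{f}A\xrightarrow{i}X$ in $\mathbf{MetCH_{sep}}$.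
   Context: A metric on a set $X$ is a map $d\colon X\times X\to[0,\infty]$ with $d(x,x)=0$ and $d(x,z)\le d(x,y)+d(y,z)$ (not necessarily symmetric, $\infty$ allowed); separated means $d(x,y)=0=d(y,x)$ implies $x=y$. The upper topology on $[0,\infty]$ has as nonempty proper open sets the sets $]u,\infty]$. A separated metric compact Hausdorff space is a compact Hausdorff space with a separated metric continuous as a map $X\times X\to[0,\infty]$ with the upper topology. $\mathbf{MetCH_{sep}}$: these spaces with continuous non-expansive maps ($d_Y(f(x),f(y))\le d_X(x,y)$). An embedding is an injective morphism $f$ with $d_X(x,y)=d_Y(f(x),f(y))$. The coproduct $B+X$ is the disjoint union with coproduct topology and the metric agreeing with $d_B$, $d_X$ on the summands and equal to $\infty$ between points of different summands. A continuous submetric on a separated metric compact Hausdorff space $(Z,d)$ is a (not necessarily separated) metric $\gamma$ on $Z$, continuous $Z\times Z\to[0,\infty]$ for the upper topology, with $\gamma\le d$ pointwise. For such $\gamma$, $\sim_\gamma$ is the equivalence relation $z\sim_\gamma w\iff\gamma(z,w)=\gamma(w,z)=0$, and $Z/{\sim_\gamma}$ is the quotient set with the quotient topology and metric $([z],[w])\mapsto\gamma(z,w)$; the projection $Z\to Z/{\sim_\gamma}$ is a surjective morphism of $\mathbf{MetCH_{sep}}$. *)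

theory Defs
  imports "HOL-Analysis.Analysis" "HOL-Library.Extended_Nonnegative_Real"
begin

definition upper_ennreal :: "ennreal topology" where
  "upper_ennreal = topology_generated_by (insert UNIV (range greaterThan))"

text \<open>A space is given by a topology T (its carrier is topspace T) and a
  metric d with values in [0,\<infinity>] (not necessarily symmetric).\<close>

definition is_metric_on :: "'a set \<Rightarrow> ('a \<Rightarrow> 'a \<Rightarrow> ennreal) \<Rightarrow> bool" where
  "is_metric_on S d \<longleftrightarrow>
     (\<forall>x\<in>S. d x x = 0) \<and> (\<forall>x\<in>S. \<forall>y\<in>S. \<forall>z\<in>S. d x z \<le> d x y + d y z)"

definition metric_continuous :: "'a topology \<Rightarrow> ('a \<Rightarrow> 'a \<Rightarrow> ennreal) \<Rightarrow> bool" where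
  "metric_continuous T d \<longleftrightarrow>
     continuous_map (prod_topology T T) upper_ennreal (\<lambda>(x, y). d x y)"

definition metCH_sep :: "'a topology \<Rightarrow> ('a \<Rightarrow> 'a \<Rightarrow> ennreal) \<Rightarrow> bool" where
  "metCH_sep T d \<longleftrightarrow>
     compact_space T \<and> Hausdorff_space T \<and> is_metric_on (topspace T) d \<and>
     (\<forall>x\<in>topspace T. \<forall>y\<in>topspace T. d x y = 0 \<and> d y x = 0 \<longrightarrow> x = y) \<and>
     metric_continuous T d"

definition met_morphism ::
  "'a topology \<Rightarrow> ('a \<Rightarrow> 'a \<Rightarrow> ennreal) \<Rightarrow> 'b topology \<Rightarrow> ('b \<Rightarrow> 'b \<Rightarrow> ennreal) \<Rightarrow> ('a \<Rightarrow> 'b) \<Rightarrow> bool"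
  where
  "met_morphism T d S e f \<longleftrightarrow>
     continuous_map T S f \<and> (\<forall>x\<in>topspace T. \<forall>y\<in>topspace T. e (f x) (f y) \<le> d x y)"

definition met_embedding ::
  "'a topology \<Rightarrow> ('a \<Rightarrow> 'a \<Rightarrow> ennreal) \<Rightarrow> 'b topology \<Rightarrow> ('b \<Rightarrow> 'b \<Rightarrow> ennreal) \<Rightarrow> ('a \<Rightarrow> 'b) \<Rightarrow> bool"
  where
  "met_embedding T d S e f \<longleftrightarrow>
     met_morphism T d S e f \<and> inj_on f (topspace T) \<and>
     (\<forall>x\<in>topspace T. \<forall>y\<in>topspace T. e (f x) (f y) = d x y)"

definition coprod_top :: "'b topology \<Rightarrow> 'x topology \<Rightarrow> ('b + 'x) topology" where
  "coprod_top TB TX = topology (\<lambda>U. U \<subseteq> Inl ` topspace TB \<union> Inr ` topspace TX \<and>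
       openin TB (Inl -` U) \<and> openin TX (Inr -` U))"

lemma istopology_coprod:
  "istopology (\<lambda>U. U \<subseteq> Inl ` topspace TB \<union> Inr ` topspace TX \<and>
       openin TB (Inl -` U) \<and> openin TX (Inr -` U))"
  unfolding istopology_def
  by (auto simp: vimage_Union intro!: openin_Union)

lemma openin_coprod_top:
  "openin (coprod_top TB TX) U \<longleftrightarrow> U \<subseteq> Inl ` topspace TB \<union> Inr ` topspace TX \<and>
       openin TB (Inl -` U) \<and> openin TX (Inr -` U)"
  unfolding coprod_top_def by (simp add: topology_inverse'[OF istopology_coprod])

fun coprod_met :: "('b \<Rightarrow> 'b \<Rightarrow> ennreal) \<Rightarrow> ('x \<Rightarrow> 'x \<Rightarrow> ennreal) \<Rightarrow> 'b + 'x \<Rightarrow> 'b + 'x \<Rightarrow> ennreal" where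
  "coprod_met dB dX (Inl b) (Inl b') = dB b b'"
| "coprod_met dB dX (Inr x) (Inr x') = dX x x'"
| "coprod_met dB dX (Inl b) (Inr x) = \<infinity>"
| "coprod_met dB dX (Inr x) (Inl b) = \<infinity>"

definition continuous_submetric :: "'a topology \<Rightarrow> ('a \<Rightarrow> 'a \<Rightarrow> ennreal) \<Rightarrow> ('a \<Rightarrow> 'a \<Rightarrow> ennreal) \<Rightarrow> bool" where
  "continuous_submetric T d \<gamma> \<longleftrightarrow>
     is_metric_on (topspace T) \<gamma> \<and> metric_continuous T \<gamma> \<and>
     (\<forall>x\<in>topspace T. \<forall>y\<in>topspace T. \<gamma> x y \<le> d x y)"

definition qclass :: "'a set \<Rightarrow> ('a \<Rightarrow> 'a \<Rightarrow> ennreal) \<Rightarrow> 'a \<Rightarrow> 'a set" where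
  "qclass S \<gamma> z = {w \<in> S. \<gamma> z w = 0 \<and> \<gamma> w z = 0}"

definition quot_top :: "'a topology \<Rightarrow> ('a \<Rightarrow> 'a \<Rightarrow> ennreal) \<Rightarrow> 'a set topology" where
  "quot_top T \<gamma> = topology (\<lambda>U. U \<subseteq> qclass (topspace T) \<gamma> ` topspace T \<and>
       openin T {z \<in> topspace T. qclass (topspace T) \<gamma> z \<in> U})"

lemma istopology_quot:
  "istopology (\<lambda>U. U \<subseteq> qclass (topspace T) \<gamma> ` topspace T \<and>
       openin T {z \<in> topspace T. qclass (topspace T) \<gamma> z \<in> U})"
proof -
  have 1: "{z \<in> topspace T. q z \<in> \<Union>K} = \<Union>((\<lambda>U. {z \<in> topspace T. q z \<in> U}) ` K)"
    for q :: "'a \<Rightarrow> 'a set" and K by auto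
  have 2: "{z \<in> topspace T. q z \<in> U \<inter> V} = {z \<in> topspace T. q z \<in> U} \<inter> {z \<in> topspace T. q z \<in> V}"
    for q :: "'a \<Rightarrow> 'a set" and U V by auto
  show ?thesis unfolding istopology_def
    by (auto simp only: 1 2 intro!: openin_Union openin_Int)
qed

definition quot_met :: "('a \<Rightarrow> 'a \<Rightarrow> ennreal) \<Rightarrow> 'a set \<Rightarrow> 'a set \<Rightarrow> ennreal" where
  "quot_met \<gamma> c c' = \<gamma> (SOME z. z \<in> c) (SOME w. w \<in> c')"

fun gamma_po ::
  "'a set \<Rightarrow> ('a \<Rightarrow> 'a \<Rightarrow> ennreal) \<Rightarrow> ('b \<Rightarrow> 'b \<Rightarrow> ennreal) \<Rightarrow> ('x \<Rightarrow> 'x \<Rightarrow> ennreal)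
   \<Rightarrow> ('a \<Rightarrow> 'b) \<Rightarrow> ('a \<Rightarrow> 'x) \<Rightarrow> 'b + 'x \<Rightarrow> 'b + 'x \<Rightarrow> ennreal" where
  "gamma_po A dA dB dX f i (Inl b) (Inl b') = dB b b'"
| "gamma_po A dA dB dX f i (Inr x) (Inr x') =
     min (dX x x') (INF a\<in>A. INF a'\<in>A. dX x (i a) + dB (f a) (f a') + dX (i a') x')"
| "gamma_po A dA dB dX f i (Inl b) (Inr x) = (INF a\<in>A. dB b (f a) + dX (i a) x)"
| "gamma_po A dA dB dX f i (Inr x) (Inl b) = (INF a\<in>A. dX x (i a) + dB (f a) b)"

end

theory Submission
  imports Defs
begin



lemma topspace_upper [simp]: "topspace upper_ennreal = UNIV"
  unfolding upper_ennreal_def by auto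

lemma upper_cont_iff:
  "continuous_map T upper_ennreal \<phi> \<longleftrightarrow> (\<forall>u. openin T {p\<in>topspace T. u < \<phi> p})"
proof
  assume c: "continuous_map T upper_ennreal \<phi>"
  show "\<forall>u. openin T {p\<in>topspace T. u < \<phi> p}"
  proof
    fix u :: ennreal
    have "openin upper_ennreal {u<..}" unfolding upper_ennreal_def
      by (rule topology_generated_by_Basis) auto
    from openin_continuous_map_preimage[OF c this] show "openin T {p\<in>topspace T. u < \<phi> p}" by simp
  qed
next
  assume H: "\<forall>u. openin T {p\<in>topspace T. u < \<phi> p}"
  have *: "openin T {x\<in>topspace T. \<phi> x \<in> U}" if "generate_topology_on (insert UNIV (range greaterThan)) U" for U
    using that
  proof induction
    case Empty then show ?case by simp
  next
    case (Int a b)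
    have "{x\<in>topspace T. \<phi> x \<in> a \<inter> b} = {x\<in>topspace T. \<phi> x \<in> a} \<inter> {x\<in>topspace T. \<phi> x \<in> b}" by auto
    then show ?case using Int by auto
  next
    case (UN K)
    have "{x\<in>topspace T. \<phi> x \<in> \<Union>K} = (\<Union>k\<in>K. {x\<in>topspace T. \<phi> x \<in> k})" by auto
    then show ?case using UN by auto
  next
    case (Basis s)
    then show ?case using H by auto
  qed
  show "continuous_map T upper_ennreal \<phi>"
    unfolding continuous_map
  proof (intro conjI allI impI)
    show "\<phi> ` topspace T \<subseteq> topspace upper_ennreal" by simp
    fix U assume "openin upper_ennreal U"
    then have "generate_topology_on (insert UNIV (range greaterThan)) U"
      unfolding upper_ennreal_def by (rule openin_topology_generated_by)
    then show "openin T {x \<in> topspace T. \<phi> x \<in> U}" by (rule *)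
  qed
qed

lemma upper_cont_pointwise:
  "continuous_map T upper_ennreal \<phi> \<longleftrightarrow>
    (\<forall>u. \<forall>p\<in>topspace T. u < \<phi> p \<longrightarrow> (\<exists>U. openin T U \<and> p \<in> U \<and> (\<forall>p'\<in>U. u < \<phi> p')))"
proof -
  have "openin T {p\<in>topspace T. u < \<phi> p} \<longleftrightarrow>
    (\<forall>p\<in>topspace T. u < \<phi> p \<longrightarrow> (\<exists>U. openin T U \<and> p \<in> U \<and> (\<forall>p'\<in>U. u < \<phi> p')))" for u
  proof
    assume "openin T {p\<in>topspace T. u < \<phi> p}"
    then show "\<forall>p\<in>topspace T. u < \<phi> p \<longrightarrow> (\<exists>U. openin T U \<and> p \<in> U \<and> (\<forall>p'\<in>U. u < \<phi> p'))"
      by blast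
  next
    assume H: "\<forall>p\<in>topspace T. u < \<phi> p \<longrightarrow> (\<exists>U. openin T U \<and> p \<in> U \<and> (\<forall>p'\<in>U. u < \<phi> p'))"
    show "openin T {p\<in>topspace T. u < \<phi> p}"
    proof (subst openin_subopen, intro ballI)
      fix x assume "x \<in> {p\<in>topspace T. u < \<phi> p}"
      then obtain U where U: "openin T U" "x \<in> U" "\<forall>p'\<in>U. u < \<phi> p'" using H by blast
      have "U \<subseteq> {p\<in>topspace T. u < \<phi> p}" using openin_subset[OF U(1)] U(3) by blast
      then show "\<exists>Ta. openin T Ta \<and> x \<in> Ta \<and> Ta \<subseteq> {p\<in>topspace T. u < \<phi> p}"
        using U by blast
    qed
  qed
  then show ?thesis unfolding upper_cont_iff by blast
qed

lemma ennreal_add_split: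
  fixes u a b :: ennreal
  assumes "u < a + b"
  shows "u < a \<or> u < b \<or> (\<exists>ua ub. ua < a \<and> ub < b \<and> u \<le> ua + ub)"
proof (rule ccontr)
  assume N: "\<not> ?thesis"
  then have ua: "a \<le> u" and ub: "b \<le> u" by auto
  have uf: "u < top" using assms top_greatest by (rule less_le_trans)
  obtain ru where ru: "u = ennreal ru" "ru \<ge> 0" using uf by (cases u) auto
  obtain ra where ra: "a = ennreal ra" "ra \<ge> 0" using ua uf by (cases a) auto
  obtain rb where rb: "b = ennreal rb" "rb \<ge> 0" using ub uf by (cases b) auto
  have r1: "ra \<le> ru" "rb \<le> ru" "ru < ra + rb"
    using ua ub assms ru ra rb apply (auto simp: ennreal_plus[symmetric] simp del: ennreal_plus)
    by (meson ennreal_less_iff order.trans)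
  define \<delta> where "\<delta> = (ra + rb - ru) / 2"
  have "ennreal (ra - \<delta>) < a" "ennreal (rb - \<delta>) < b" "u \<le> ennreal (ra - \<delta>) + ennreal (rb - \<delta>)"
  proof -
    have d1: "0 < \<delta>" using r1 unfolding \<delta>_def by (simp add: field_simps)
    have d2: "\<delta> \<le> ra / 2" using r1 unfolding \<delta>_def by (simp add: field_simps)
    have d3: "\<delta> \<le> rb / 2" using r1 unfolding \<delta>_def by (simp add: field_simps)
    note d = d1 d2 d3
    have "ra > 0" "rb > 0" using r1 ra rb by linarith+
    then show "ennreal (ra - \<delta>) < a" "ennreal (rb - \<delta>) < b" using d unfolding ra(1) rb(1)
      by (intro ennreal_lessI; linarith)+
    have e: "ru = (ra - \<delta>) + (rb - \<delta>)" unfolding \<delta>_def by simp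
    have "ennreal (ra - \<delta>) + ennreal (rb - \<delta>) = ennreal ((ra - \<delta>) + (rb - \<delta>))"
      using d \<open>ra > 0\<close> \<open>rb > 0\<close> by (intro ennreal_plus[symmetric]) linarith+
    then show "u \<le> ennreal (ra - \<delta>) + ennreal (rb - \<delta>)" using e ru by simp
  qed
  then show False using N by blast
qed

lemma ennreal_add_strict:
  fixes a b c d :: ennreal
  assumes "a < c" "b < d" shows "a + b < c + d"
proof -
  have "a < top" using assms(1) top_greatest by (rule less_le_trans)
  then have "a \<noteq> top" by simp
  then have "a + b < a + d" using assms(2) by (simp add: ennreal_add_left_cancel_less)
  also have "a + d \<le> c + d" using assms(1) by (simp add: add_right_mono less_imp_le)
  finally show ?thesis .
qed


lemma upper_cont_add:
  assumes "continuous_map T upper_ennreal \<phi>" "continuous_map T upper_ennreal \<psi>"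
  shows "continuous_map T upper_ennreal (\<lambda>p. \<phi> p + \<psi> p)"
  unfolding upper_cont_pointwise
proof (intro allI ballI impI)
  fix u p assume p: "p \<in> topspace T" and u: "u < \<phi> p + \<psi> p"
  from ennreal_add_split[OF u] show "\<exists>U. openin T U \<and> p \<in> U \<and> (\<forall>p'\<in>U. u < \<phi> p' + \<psi> p')"
  proof (elim disjE exE conjE)
    assume "u < \<phi> p"
    then obtain U where "openin T U" "p \<in> U" "\<forall>p'\<in>U. u < \<phi> p'"
      using assms(1) p unfolding upper_cont_pointwise by blast
    moreover have "u < \<phi> p' + \<psi> p'" if "u < \<phi> p'" for p'
      using that by (rule less_le_trans) (rule add_increasing2[OF zero_le order_refl])
    ultimately show ?thesis by blast
  next
    assume "u < \<psi> p"
    then obtain U where "openin T U" "p \<in> U" "\<forall>p'\<in>U. u < \<psi> p'"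
      using assms(2) p unfolding upper_cont_pointwise by blast
    moreover have "u < \<phi> p' + \<psi> p'" if "u < \<psi> p'" for p'
      using that by (rule less_le_trans) (rule add_increasing[OF zero_le order_refl])
    ultimately show ?thesis by blast
  next
    fix ua ub assume h: "ua < \<phi> p" "ub < \<psi> p" "u \<le> ua + ub"
    obtain U where U: "openin T U" "p \<in> U" "\<forall>p'\<in>U. ua < \<phi> p'"
      using assms(1) p h unfolding upper_cont_pointwise by blast
    obtain V where V: "openin T V" "p \<in> V" "\<forall>p'\<in>V. ub < \<psi> p'"
      using assms(2) p h unfolding upper_cont_pointwise by blast
    show ?thesis
    proof (intro exI[of _ "U \<inter> V"] conjI ballI)
      show "openin T (U \<inter> V)" using U V by (simp add: openin_Int)
      show "p \<in> U \<inter> V" using U V by simp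
      fix p' assume "p' \<in> U \<inter> V"
      then have "ua + ub < \<phi> p' + \<psi> p'" using U V by (intro ennreal_add_strict) auto
      then show "u < \<phi> p' + \<psi> p'" by (rule le_less_trans[OF h(3)])
    qed
  qed
qed

lemma upper_cont_min:
  assumes "continuous_map T upper_ennreal \<phi>" "continuous_map T upper_ennreal \<psi>"
  shows "continuous_map T upper_ennreal (\<lambda>p. min (\<phi> p) (\<psi> p))"
  unfolding upper_cont_pointwise
proof (intro allI ballI impI)
  fix u p assume p: "p \<in> topspace T" and u: "u < min (\<phi> p) (\<psi> p)"
  have u1: "u < \<phi> p" and u2: "u < \<psi> p" using u by simp_all
  obtain U where U: "openin T U" "p \<in> U" "\<forall>p'\<in>U. u < \<phi> p'"
    using assms(1) p u1 unfolding upper_cont_pointwise by blast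
  obtain V where V: "openin T V" "p \<in> V" "\<forall>p'\<in>V. u < \<psi> p'"
    using assms(2) p u2 unfolding upper_cont_pointwise by blast
  show "\<exists>U. openin T U \<and> p \<in> U \<and> (\<forall>p'\<in>U. u < min (\<phi> p') (\<psi> p'))"
  proof (intro exI[of _ "U \<inter> V"] conjI ballI)
    show "openin T (U \<inter> V)" using U V by (simp add: openin_Int)
    show "p \<in> U \<inter> V" using U V by simp
    fix p' assume "p' \<in> U \<inter> V"
    then show "u < min (\<phi> p') (\<psi> p')" using U V by simp
  qed
qed


lemma upper_cont_INF:
  assumes K: "compact_space K"
    and c: "continuous_map (prod_topology P K) upper_ennreal (\<lambda>pk. \<phi> (fst pk) (snd pk))"
  shows "continuous_map P upper_ennreal (\<lambda>p. INF k\<in>topspace K. \<phi> p k)"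
  unfolding upper_cont_pointwise
proof (intro allI ballI impI)
  fix u p assume p: "p \<in> topspace P" and u: "u < (INF k\<in>topspace K. \<phi> p k)"
  obtain v where v: "u < v" "v < (INF k\<in>topspace K. \<phi> p k)" using dense[OF u] by blast
  have op: "openin (prod_topology P K) {pk \<in> topspace (prod_topology P K). v < \<phi> (fst pk) (snd pk)}"
    using c unfolding upper_cont_iff by blast
  have "\<forall>k\<in>topspace K. \<exists>UW. openin P (fst UW) \<and> openin K (snd UW) \<and> p \<in> fst UW \<and> k \<in> snd UW \<and>
      (\<forall>p'\<in>fst UW. \<forall>k'\<in>snd UW. v < \<phi> p' k')"
  proof
    fix k assume k: "k \<in> topspace K"
    have "v < \<phi> p k" using less_le_trans[OF v(2) INF_lower[OF k]] .
    then have pkin: "(p, k) \<in> {pk \<in> topspace (prod_topology P K). v < \<phi> (fst pk) (snd pk)}"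
      using p k by simp
    obtain U W where UW: "openin P U" "openin K W" "p \<in> U" "k \<in> W"
      "U \<times> W \<subseteq> {pk \<in> topspace (prod_topology P K). v < \<phi> (fst pk) (snd pk)}"
      using op[unfolded openin_prod_topology_alt, rule_format, OF pkin] by blast
    have "\<forall>p'\<in>U. \<forall>k'\<in>W. v < \<phi> p' k'"
    proof (intro ballI)
      fix p' k' assume "p' \<in> U" "k' \<in> W"
      then have "(p', k') \<in> U \<times> W" by simp
      then show "v < \<phi> p' k'" using UW(5) by auto
    qed
    then show "\<exists>UW. openin P (fst UW) \<and> openin K (snd UW) \<and> p \<in> fst UW \<and> k \<in> snd UW \<and>
      (\<forall>p'\<in>fst UW. \<forall>k'\<in>snd UW. v < \<phi> p' k')"
      using UW by (intro exI[of _ "(U, W)"]) simp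
  qed
  from bchoice[OF this] obtain UW where UW0: "\<forall>k\<in>topspace K. openin P (fst (UW k)) \<and> openin K (snd (UW k)) \<and> p \<in> fst (UW k) \<and> k \<in> snd (UW k) \<and>
      (\<forall>p'\<in>fst (UW k). \<forall>k'\<in>snd (UW k). v < \<phi> p' k')"
    by blast
  have UW: "\<And>k. k \<in> topspace K \<Longrightarrow> openin P (fst (UW k)) \<and> openin K (snd (UW k)) \<and> p \<in> fst (UW k) \<and> k \<in> snd (UW k) \<and>
      (\<forall>p'\<in>fst (UW k). \<forall>k'\<in>snd (UW k). v < \<phi> p' k')" using UW0 by blast
  define W where "W k = snd (UW k)" for k
  define U where "U k = fst (UW k)" for k
  have "compactin K (topspace K)" using K unfolding compact_space_def .
  then have cK: "\<forall>\<U>. (\<forall>U \<in> \<U>. openin K U) \<and> topspace K \<subseteq> \<Union>\<U> \<longrightarrow> (\<exists>\<F>. finite \<F> \<and> \<F> \<subseteq> \<U> \<and> topspace K \<subseteq> \<Union>\<F>)"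
    unfolding compactin_def by (rule conjunct2)
  have "\<forall>X\<in>W ` topspace K. openin K X" using UW unfolding W_def by auto
  moreover have "topspace K \<subseteq> \<Union>(W ` topspace K)" using UW unfolding W_def by auto
  ultimately obtain F where F: "finite F" "F \<subseteq> W ` topspace K" "topspace K \<subseteq> \<Union>F"
    using cK[rule_format, of "W ` topspace K"] by blast
  obtain G where G: "G \<subseteq> topspace K" "finite G" "F = W ` G"
    using finite_subset_image[OF F(1) F(2)] by blast
  define Oo where "Oo = (\<Inter>g\<in>G. U g) \<inter> topspace P"
  have "openin P Oo" unfolding Oo_def using G UW unfolding U_def by (intro openin_INT) auto
  moreover have "p \<in> Oo" unfolding Oo_def using G UW p unfolding U_def by auto
  moreover have "u < (INF k\<in>topspace K. \<phi> p' k)" if p': "p' \<in> Oo" for p'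
  proof -
    have "v \<le> (INF k\<in>topspace K. \<phi> p' k)"
    proof (rule INF_greatest)
      fix k' assume k': "k' \<in> topspace K"
      then obtain g where g: "g \<in> G" "k' \<in> W g" using F(3) G(3) by auto
      have "p' \<in> U g" using p' g(1) unfolding Oo_def by auto
      have "g \<in> topspace K" using g(1) G(1) by blast
      then have "\<forall>p'\<in>U g. \<forall>k'\<in>W g. v < \<phi> p' k'" using UW[of g] unfolding U_def W_def by blast
      then show "v \<le> \<phi> p' k'" using \<open>p' \<in> U g\<close> g(2) by (simp add: less_imp_le)
    qed
    with v(1) show ?thesis by (rule less_le_trans)
  qed
  ultimately show "\<exists>U. openin P U \<and> p \<in> U \<and> (\<forall>p'\<in>U. u < (INF k\<in>topspace K. \<phi> p' k))"
    by blast
qed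


lemma topspace_coprod:
  "topspace (coprod_top TB TX) = Inl ` topspace TB \<union> Inr ` topspace TX"
proof
  show "topspace (coprod_top TB TX) \<subseteq> Inl ` topspace TB \<union> Inr ` topspace TX"
    unfolding topspace_def openin_coprod_top by blast
  have "Inl -` (Inl ` topspace TB \<union> Inr ` topspace TX) = topspace TB" by auto
  moreover have "Inr -` (Inl ` topspace TB \<union> Inr ` topspace TX) = topspace TX" by auto
  ultimately have "openin (coprod_top TB TX) (Inl ` topspace TB \<union> Inr ` topspace TX)"
    unfolding openin_coprod_top by simp
  then show "Inl ` topspace TB \<union> Inr ` topspace TX \<subseteq> topspace (coprod_top TB TX)"
    by (rule openin_subset)
qed

lemma openin_Inl_image:
  assumes "openin TB U" shows "openin (coprod_top TB TX) (Inl ` U)"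
proof -
  have "U \<subseteq> topspace TB" using assms by (rule openin_subset)
  moreover have e1: "Inl -` Inl ` U = U" by auto
  moreover have e2: "Inr -` Inl ` U = {}" by auto
  ultimately show ?thesis unfolding openin_coprod_top e1 e2 using assms by auto
qed

lemma openin_Inr_image:
  assumes "openin TX U" shows "openin (coprod_top TB TX) (Inr ` U)"
proof -
  have "U \<subseteq> topspace TX" using assms by (rule openin_subset)
  moreover have e1: "Inr -` Inr ` U = U" by auto
  moreover have e2: "Inl -` Inr ` U = {}" by auto
  ultimately show ?thesis unfolding openin_coprod_top e1 e2 using assms by auto
qed

lemma continuous_map_coprod:
  assumes g: "continuous_map TB Y g" and h: "continuous_map TX Y h"
  shows "continuous_map (coprod_top TB TX) Y (case_sum g h)"
  unfolding continuous_map
proof (intro conjI allI impI)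
  show "case_sum g h ` topspace (coprod_top TB TX) \<subseteq> topspace Y"
    using continuous_map_image_subset_topspace[OF g] continuous_map_image_subset_topspace[OF h]
    unfolding topspace_coprod by auto
  fix U assume U: "openin Y U"
  have 1: "Inl -` {z \<in> topspace (coprod_top TB TX). case_sum g h z \<in> U} = {x \<in> topspace TB. g x \<in> U}"
    unfolding topspace_coprod by auto
  have 2: "Inr -` {z \<in> topspace (coprod_top TB TX). case_sum g h z \<in> U} = {x \<in> topspace TX. h x \<in> U}"
    unfolding topspace_coprod by auto
  show "openin (coprod_top TB TX) {z \<in> topspace (coprod_top TB TX). case_sum g h z \<in> U}"
    unfolding openin_coprod_top 1 2
    using openin_continuous_map_preimage[OF g U] openin_continuous_map_preimage[OF h U]
    unfolding topspace_coprod by auto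
qed

lemma continuous_map_Inl: "continuous_map TB (coprod_top TB TX) Inl"
  unfolding continuous_map
proof (intro conjI allI impI)
  show "Inl ` topspace TB \<subseteq> topspace (coprod_top TB TX)" unfolding topspace_coprod by auto
  fix U assume "openin (coprod_top TB TX) U"
  then have "openin TB (Inl -` U)" unfolding openin_coprod_top by auto
  moreover have "Inl -` U \<subseteq> topspace TB" using calculation by (rule openin_subset)
  moreover have "{x \<in> topspace TB. Inl x \<in> U} = Inl -` U" using calculation(2) by auto
  ultimately show "openin TB {x \<in> topspace TB. Inl x \<in> U}" by simp
qed

lemma continuous_map_Inr: "continuous_map TX (coprod_top TB TX) Inr"
  unfolding continuous_map
proof (intro conjI allI impI)
  show "Inr ` topspace TX \<subseteq> topspace (coprod_top TB TX)" unfolding topspace_coprod by auto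
  fix U assume "openin (coprod_top TB TX) U"
  then have "openin TX (Inr -` U)" unfolding openin_coprod_top by auto
  moreover have "Inr -` U \<subseteq> topspace TX" using calculation by (rule openin_subset)
  moreover have "{x \<in> topspace TX. Inr x \<in> U} = Inr -` U" using calculation(2) by auto
  ultimately show "openin TX {x \<in> topspace TX. Inr x \<in> U}" by simp
qed

lemma compact_coprod:
  assumes "compact_space TB" "compact_space TX"
  shows "compact_space (coprod_top TB TX)"
proof -
  have "compactin (coprod_top TB TX) (Inl ` topspace TB)"
    using assms(1) continuous_map_Inl unfolding compact_space_def by (rule image_compactin)
  moreover have "compactin (coprod_top TB TX) (Inr ` topspace TX)"
    using assms(2) continuous_map_Inr unfolding compact_space_def by (rule image_compactin)
  ultimately show ?thesis unfolding compact_space_def topspace_coprod by (rule compactin_Un)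
qed

lemma Hausdorff_coprod:
  assumes HB: "Hausdorff_space TB" and HX: "Hausdorff_space TX"
  shows "Hausdorff_space (coprod_top TB TX)"
  unfolding Hausdorff_space_def
proof (intro allI impI, elim conjE)
  fix z w assume z: "z \<in> topspace (coprod_top TB TX)" and w: "w \<in> topspace (coprod_top TB TX)" and zw: "z \<noteq> w"
  have oB: "openin (coprod_top TB TX) (Inl ` topspace TB)" by (rule openin_Inl_image) simp
  have oX: "openin (coprod_top TB TX) (Inr ` topspace TX)" by (rule openin_Inr_image) simp
  show "\<exists>U V. openin (coprod_top TB TX) U \<and> openin (coprod_top TB TX) V \<and> z \<in> U \<and> w \<in> V \<and> disjnt U V"
  proof (cases z)
    case (Inl b)
    show ?thesis
    proof (cases w)
      case (Inl b')
      have "b \<in> topspace TB" "b' \<in> topspace TB" "b \<noteq> b'" using z w zw \<open>z = Inl b\<close> \<open>w = Inl b'\<close> unfolding topspace_coprod by auto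
      then obtain U V where "openin TB U" "openin TB V" "b \<in> U" "b' \<in> V" "disjnt U V"
        using HB unfolding Hausdorff_space_def by blast
      then show ?thesis using \<open>z = Inl b\<close> \<open>w = Inl b'\<close>
        by (intro exI[of _ "Inl ` U"] exI[of _ "Inl ` V"]) (auto simp: openin_Inl_image disjnt_def)
    next
      case (Inr x)
      then show ?thesis using oB oX \<open>z = Inl b\<close> z w unfolding topspace_coprod
        by (intro exI[of _ "Inl ` topspace TB"] exI[of _ "Inr ` topspace TX"]) (auto simp: disjnt_def)
    qed
  next
    case (Inr x)
    show ?thesis
    proof (cases w)
      case (Inl b)
      then show ?thesis using oB oX \<open>z = Inr x\<close> z w unfolding topspace_coprod
        by (intro exI[of _ "Inr ` topspace TX"] exI[of _ "Inl ` topspace TB"]) (auto simp: disjnt_def)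
    next
      case (Inr x')
      have "x \<in> topspace TX" "x' \<in> topspace TX" "x \<noteq> x'" using z w zw \<open>z = Inr x\<close> \<open>w = Inr x'\<close> unfolding topspace_coprod by auto
      then obtain U V where "openin TX U" "openin TX V" "x \<in> U" "x' \<in> V" "disjnt U V"
        using HX unfolding Hausdorff_space_def by blast
      then show ?thesis using \<open>z = Inr x\<close> \<open>w = Inr x'\<close>
        by (intro exI[of _ "Inr ` U"] exI[of _ "Inr ` V"]) (auto simp: openin_Inr_image disjnt_def)
    qed
  qed
qed


lemma box_helper:
  assumes c: "continuous_map (prod_topology T1 T2) upper_ennreal (\<lambda>p. \<gamma> (e1 (fst p)) (e2 (snd p)))"
    and o1: "\<And>U. openin T1 U \<Longrightarrow> openin Z (e1 ` U)"
    and o2: "\<And>U. openin T2 U \<Longrightarrow> openin Z (e2 ` U)"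
    and a: "a \<in> topspace T1" and b: "b \<in> topspace T2" and u: "u < \<gamma> (e1 a) (e2 b)"
  shows "\<exists>U V. openin Z U \<and> openin Z V \<and> e1 a \<in> U \<and> e2 b \<in> V \<and> (\<forall>z\<in>U. \<forall>w\<in>V. u < \<gamma> z w)"
proof -
  let ?S = "{p \<in> topspace (prod_topology T1 T2). u < \<gamma> (e1 (fst p)) (e2 (snd p))}"
  have op: "openin (prod_topology T1 T2) ?S" using c unfolding upper_cont_iff by blast
  have ab: "(a, b) \<in> ?S" using a b u by simp
  obtain U V where UV: "openin T1 U" "openin T2 V" "a \<in> U" "b \<in> V" "U \<times> V \<subseteq> ?S"
    using op[unfolded openin_prod_topology_alt, rule_format, OF ab] by blast
  have "\<forall>z\<in>e1 ` U. \<forall>w\<in>e2 ` V. u < \<gamma> z w"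
  proof (intro ballI)
    fix z w assume "z \<in> e1 ` U" "w \<in> e2 ` V"
    then obtain x y where "x \<in> U" "y \<in> V" "z = e1 x" "w = e2 y" by blast
    then have "(x, y) \<in> ?S" using UV(5) by blast
    then show "u < \<gamma> z w" using \<open>z = e1 x\<close> \<open>w = e2 y\<close> by simp
  qed
  then show ?thesis using o1[OF UV(1)] o2[OF UV(2)] UV(3,4) by blast
qed

lemma coprod_upper_cont:
  fixes \<gamma> :: "'b + 'x \<Rightarrow> 'b + 'x \<Rightarrow> ennreal"
  assumes c11: "continuous_map (prod_topology TB TB) upper_ennreal (\<lambda>p. \<gamma> (Inl (fst p)) (Inl (snd p)))"
    and c12: "continuous_map (prod_topology TB TX) upper_ennreal (\<lambda>p. \<gamma> (Inl (fst p)) (Inr (snd p)))"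
    and c21: "continuous_map (prod_topology TX TB) upper_ennreal (\<lambda>p. \<gamma> (Inr (fst p)) (Inl (snd p)))"
    and c22: "continuous_map (prod_topology TX TX) upper_ennreal (\<lambda>p. \<gamma> (Inr (fst p)) (Inr (snd p)))"
  shows "continuous_map (prod_topology (coprod_top TB TX) (coprod_top TB TX)) upper_ennreal (\<lambda>p. \<gamma> (fst p) (snd p))"
  unfolding upper_cont_iff
proof
  fix u :: ennreal
  let ?Z = "coprod_top TB TX"
  let ?S = "{p \<in> topspace (prod_topology ?Z ?Z). u < \<gamma> (fst p) (snd p)}"
  have key: "\<exists>U V. openin ?Z U \<and> openin ?Z V \<and> z \<in> U \<and> w \<in> V \<and> (\<forall>z\<in>U. \<forall>w\<in>V. u < \<gamma> z w)"
    if z: "z \<in> topspace ?Z" and w: "w \<in> topspace ?Z" and u: "u < \<gamma> z w" for z w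
  proof (cases z)
    case (Inl b)
    then have b: "b \<in> topspace TB" using z unfolding topspace_coprod by auto
    show ?thesis
    proof (cases w)
      case (Inl b')
      then have b': "b' \<in> topspace TB" using w unfolding topspace_coprod by auto
      show ?thesis using box_helper[OF c11 openin_Inl_image openin_Inl_image b b'] u \<open>z = Inl b\<close> \<open>w = Inl b'\<close> by simp
    next
      case (Inr x')
      then have x': "x' \<in> topspace TX" using w unfolding topspace_coprod by auto
      show ?thesis using box_helper[OF c12 openin_Inl_image openin_Inr_image b x'] u \<open>z = Inl b\<close> \<open>w = Inr x'\<close> by simp
    qed
  next
    case (Inr x)
    then have x: "x \<in> topspace TX" using z unfolding topspace_coprod by auto
    show ?thesis
    proof (cases w)
      case (Inl b')
      then have b': "b' \<in> topspace TB" using w unfolding topspace_coprod by auto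
      show ?thesis using box_helper[OF c21 openin_Inr_image openin_Inl_image x b'] u \<open>z = Inr x\<close> \<open>w = Inl b'\<close> by simp
    next
      case (Inr x')
      then have x': "x' \<in> topspace TX" using w unfolding topspace_coprod by auto
      show ?thesis using box_helper[OF c22 openin_Inr_image openin_Inr_image x x'] u \<open>z = Inr x\<close> \<open>w = Inr x'\<close> by simp
    qed
  qed
  show "openin (prod_topology ?Z ?Z) ?S"
    unfolding openin_prod_topology_alt
  proof (intro allI impI)
    fix z w assume "(z, w) \<in> ?S"
    then have "z \<in> topspace ?Z" "w \<in> topspace ?Z" "u < \<gamma> z w" by auto
    from key[OF this] obtain U V where UV: "openin ?Z U" "openin ?Z V" "z \<in> U" "w \<in> V" "\<forall>z\<in>U. \<forall>w\<in>V. u < \<gamma> z w"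
      by blast
    have "U \<times> V \<subseteq> ?S"
    proof
      fix p assume "p \<in> U \<times> V"
      then obtain a b where "p = (a, b)" "a \<in> U" "b \<in> V" by blast
      then show "p \<in> ?S" using UV(5) openin_subset[OF UV(1)] openin_subset[OF UV(2)] by auto
    qed
    then show "\<exists>U V. openin ?Z U \<and> openin ?Z V \<and> z \<in> U \<and> w \<in> V \<and> U \<times> V \<subseteq> ?S"
      using UV by blast
  qed
qed


lemma INF_add_const_ennreal:
  fixes f :: "'i \<Rightarrow> ennreal"
  shows "(INF i\<in>I. f i + c) = (INF i\<in>I. f i) + c"
proof (cases "I = {}")
  case True then show ?thesis by simp
next
  case False
  show ?thesis
  using continuous_at_Inf_mono[of "\<lambda>x. x + c" "f`I"]
  using continuous_add[of "at_right (Inf (f`I))", of "\<lambda>x. x" "\<lambda>x. c"] False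
  by (auto simp: mono_def image_comp)
qed

lemma INF_const_add_ennreal:
  fixes f :: "'i \<Rightarrow> ennreal"
  shows "(INF i\<in>I. c + f i) = c + (INF i\<in>I. f i)"
  using INF_add_const_ennreal[of f c I] by (simp add: add.commute)

lemma le_add_INF:
  fixes x c :: ennreal
  assumes "\<And>l. l \<in> J \<Longrightarrow> x \<le> c + T l"
  shows "x \<le> c + (INF l\<in>J. T l)"
proof -
  have "x \<le> (INF l\<in>J. c + T l)" using assms by (rule INF_greatest)
  then show ?thesis by (simp add: INF_const_add_ennreal)
qed

lemma le_INF_add:
  fixes x c :: ennreal
  assumes "\<And>l. l \<in> J \<Longrightarrow> x \<le> T l + c"
  shows "x \<le> (INF l\<in>J. T l) + c"
proof -
  have "x \<le> (INF l\<in>J. T l + c)" using assms by (rule INF_greatest)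
  then show ?thesis by (simp add: INF_add_const_ennreal)
qed

lemma le_INF_add_INF:
  fixes x :: ennreal
  assumes "\<And>k l. k \<in> I \<Longrightarrow> l \<in> J \<Longrightarrow> x \<le> S k + T l"
  shows "x \<le> (INF k\<in>I. S k) + (INF l\<in>J. T l)"
  by (rule le_INF_add, rule le_add_INF, rule assms)

lemma INF_INF_prod:
  fixes g :: "'i \<Rightarrow> 'j \<Rightarrow> 'c::complete_lattice"
  shows "(INF a\<in>A. INF a'\<in>B. g a a') = (INF p\<in>A \<times> B. g (fst p) (snd p))"
proof (rule antisym)
  show "(INF a\<in>A. INF a'\<in>B. g a a') \<le> (INF p\<in>A \<times> B. g (fst p) (snd p))"
  proof (rule INF_greatest)
    fix p assume "p \<in> A \<times> B"
    then have p1: "fst p \<in> A" and p2: "snd p \<in> B" by auto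
    have "(INF a\<in>A. INF a'\<in>B. g a a') \<le> (INF a'\<in>B. g (fst p) a')" using p1 by (rule INF_lower)
    also have "\<dots> \<le> g (fst p) (snd p)" using p2 by (rule INF_lower)
    finally show "(INF a\<in>A. INF a'\<in>B. g a a') \<le> g (fst p) (snd p)" .
  qed
  show "(INF p\<in>A \<times> B. g (fst p) (snd p)) \<le> (INF a\<in>A. INF a'\<in>B. g a a')"
  proof (intro INF_greatest)
    fix a a' assume "a \<in> A" "a' \<in> B"
    then have aa: "(a, a') \<in> A \<times> B" by simp
    show "(INF p\<in>A \<times> B. g (fst p) (snd p)) \<le> g a a'"
      using INF_lower[OF aa, of "\<lambda>p. g (fst p) (snd p)"] by simp
  qed
qed

lemma metric_cont_comp:
  assumes "metric_continuous T d" "continuous_map P T g1" "continuous_map P T g2"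
  shows "continuous_map P upper_ennreal (\<lambda>p. d (g1 p) (g2 p))"
proof -
  have "continuous_map P (prod_topology T T) (\<lambda>p. (g1 p, g2 p))"
    using assms(2,3) by (rule continuous_map_pairedI)
  from continuous_map_compose[OF this assms(1)[unfolded metric_continuous_def]]
  show ?thesis by (simp add: o_def)
qed

locale po =
  fixes TA :: "'a topology" and dA :: "'a \<Rightarrow> 'a \<Rightarrow> ennreal"
    and TB :: "'b topology" and dB :: "'b \<Rightarrow> 'b \<Rightarrow> ennreal"
    and TX :: "'x topology" and dX :: "'x \<Rightarrow> 'x \<Rightarrow> ennreal"
    and i :: "'a \<Rightarrow> 'x" and f :: "'a \<Rightarrow> 'b"
  assumes A: "metCH_sep TA dA" and B: "metCH_sep TB dB" and X: "metCH_sep TX dX"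
    and i: "met_embedding TA dA TX dX i"
    and f: "met_morphism TA dA TB dB f"
begin

abbreviation "AA \<equiv> topspace TA"
abbreviation "gm \<equiv> gamma_po (topspace TA) dA dB dX f i"

lemma dB0: "b \<in> topspace TB \<Longrightarrow> dB b b = 0"
  using B unfolding metCH_sep_def is_metric_on_def by blast
lemma dX0: "x \<in> topspace TX \<Longrightarrow> dX x x = 0"
  using X unfolding metCH_sep_def is_metric_on_def by blast
lemma dBt: "b1 \<in> topspace TB \<Longrightarrow> b2 \<in> topspace TB \<Longrightarrow> b3 \<in> topspace TB \<Longrightarrow> dB b1 b3 \<le> dB b1 b2 + dB b2 b3"
  using B unfolding metCH_sep_def is_metric_on_def by blast
lemma dXt: "x1 \<in> topspace TX \<Longrightarrow> x2 \<in> topspace TX \<Longrightarrow> x3 \<in> topspace TX \<Longrightarrow> dX x1 x3 \<le> dX x1 x2 + dX x2 x3"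
  using X unfolding metCH_sep_def is_metric_on_def by blast
lemma icont: "continuous_map TA TX i" using i unfolding met_embedding_def met_morphism_def by blast
lemma fcont: "continuous_map TA TB f" using f unfolding met_morphism_def by blast
lemma iA: "a \<in> AA \<Longrightarrow> i a \<in> topspace TX" using icont continuous_map_image_subset_topspace by blast
lemma fA: "a \<in> AA \<Longrightarrow> f a \<in> topspace TB" using fcont continuous_map_image_subset_topspace by blast
lemma fle: assumes "a \<in> AA" "a' \<in> AA" shows "dB (f a) (f a') \<le> dX (i a) (i a')"
proof -
  have 1: "dB (f a) (f a') \<le> dA a a'" using f assms unfolding met_morphism_def by blast
  have 2: "dX (i a) (i a') = dA a a'" using i assms unfolding met_embedding_def by blast
  show ?thesis using 1 2 by simp
qed
lemma fle2: assumes "a \<in> AA" "a' \<in> AA" "x \<in> topspace TX"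
  shows "dB (f a) (f a') \<le> dX (i a) x + dX x (i a')"
  using fle[OF assms(1,2)] dXt[OF iA[OF assms(1)] assms(3) iA[OF assms(2)]] by (rule order_trans)

lemma gmRR: "gm (Inr x) (Inr x') = min (dX x x')
   (INF p\<in>AA \<times> AA. dX x (i (fst p)) + dB (f (fst p)) (f (snd p)) + dX (i (snd p)) x')"
  by (simp add: INF_INF_prod)

end


lemma le_min_add: "L \<le> a + c \<Longrightarrow> L \<le> b + c \<Longrightarrow> L \<le> min a b + (c::ennreal)"
  by (cases "a \<le> b") (simp_all add: min_def)
lemma le_add_min: "L \<le> c + a \<Longrightarrow> L \<le> c + b \<Longrightarrow> L \<le> c + min a (b::ennreal)"
  by (cases "a \<le> b") (simp_all add: min_def)

context po begin

definition D2 where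
  "D2 x x' = (INF p\<in>AA \<times> AA. dX x (i (fst p)) + dB (f (fst p)) (f (snd p)) + dX (i (snd p)) x')"

lemma gmRR': "gm (Inr x) (Inr x') = min (dX x x') (D2 x x')"
  unfolding D2_def by (rule gmRR)

lemma D2_le: "a1 \<in> AA \<Longrightarrow> a2 \<in> AA \<Longrightarrow> D2 x x' \<le> dX x (i a1) + dB (f a1) (f a2) + dX (i a2) x'"
  unfolding D2_def using INF_lower[of "(a1, a2)" "AA \<times> AA" "\<lambda>p. dX x (i (fst p)) + dB (f (fst p)) (f (snd p)) + dX (i (snd p)) x'"]
  by simp

lemma le_add_D2:
  assumes "\<And>a1 a2. a1 \<in> AA \<Longrightarrow> a2 \<in> AA \<Longrightarrow> y \<le> c + (dX x (i a1) + dB (f a1) (f a2) + dX (i a2) x')"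
  shows "y \<le> c + D2 x x'"
  unfolding D2_def
proof (rule le_add_INF)
  fix p assume "p \<in> AA \<times> AA"
  then show "y \<le> c + (dX x (i (fst p)) + dB (f (fst p)) (f (snd p)) + dX (i (snd p)) x')"
    using assms[of "fst p" "snd p"] by auto
qed

lemma le_D2_add:
  assumes "\<And>a1 a2. a1 \<in> AA \<Longrightarrow> a2 \<in> AA \<Longrightarrow> y \<le> (dX x (i a1) + dB (f a1) (f a2) + dX (i a2) x') + c"
  shows "y \<le> D2 x x' + c"
  unfolding D2_def
proof (rule le_INF_add)
  fix p assume "p \<in> AA \<times> AA"
  then show "y \<le> (dX x (i (fst p)) + dB (f (fst p)) (f (snd p)) + dX (i (snd p)) x') + c"
    using assms[of "fst p" "snd p"] by auto
qed

lemma tri_LLL: "b \<in> topspace TB \<Longrightarrow> b' \<in> topspace TB \<Longrightarrow> b'' \<in> topspace TB \<Longrightarrow>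
  gm (Inl b) (Inl b'') \<le> gm (Inl b) (Inl b') + gm (Inl b') (Inl b'')"
  by (simp add: dBt)

lemma tri_LLR: assumes b: "b \<in> topspace TB" and b': "b' \<in> topspace TB" and x: "x \<in> topspace TX"
  shows "gm (Inl b) (Inr x) \<le> gm (Inl b) (Inl b') + gm (Inl b') (Inr x)"
  unfolding gamma_po.simps
proof (rule le_add_INF)
  fix a assume a: "a \<in> AA"
  have "(INF a\<in>AA. dB b (f a) + dX (i a) x) \<le> dB b (f a) + dX (i a) x" using a by (rule INF_lower)
  also have "\<dots> \<le> (dB b b' + dB b' (f a)) + dX (i a) x"
    by (rule add_right_mono, rule dBt[OF b b' fA[OF a]])
  also have "\<dots> = dB b b' + (dB b' (f a) + dX (i a) x)" by (simp add: ac_simps)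
  finally show "(INF a\<in>AA. dB b (f a) + dX (i a) x) \<le> dB b b' + (dB b' (f a) + dX (i a) x)" .
qed

lemma tri_LRL: assumes b: "b \<in> topspace TB" and b': "b' \<in> topspace TB" and x: "x \<in> topspace TX"
  shows "gm (Inl b) (Inl b') \<le> gm (Inl b) (Inr x) + gm (Inr x) (Inl b')"
  unfolding gamma_po.simps
proof (rule le_INF_add_INF)
  fix a a' assume a: "a \<in> AA" and a': "a' \<in> AA"
  have "dB b b' \<le> dB b (f a) + dB (f a) b'" by (rule dBt[OF b fA[OF a] b'])
  also have "\<dots> \<le> dB b (f a) + (dB (f a) (f a') + dB (f a') b')"
    by (rule add_left_mono, rule dBt[OF fA[OF a] fA[OF a'] b'])
  also have "\<dots> \<le> dB b (f a) + ((dX (i a) x + dX x (i a')) + dB (f a') b')"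
    by (intro add_left_mono add_right_mono fle2[OF a a' x])
  also have "\<dots> = (dB b (f a) + dX (i a) x) + (dX x (i a') + dB (f a') b')" by (simp add: ac_simps)
  finally show "dB b b' \<le> (dB b (f a) + dX (i a) x) + (dX x (i a') + dB (f a') b')" .
qed

lemma tri_LRR: assumes b: "b \<in> topspace TB" and x: "x \<in> topspace TX" and x': "x' \<in> topspace TX"
  shows "gm (Inl b) (Inr x') \<le> gm (Inl b) (Inr x) + gm (Inr x) (Inr x')"
  unfolding gmRR' unfolding gamma_po.simps
proof (rule le_INF_add)
  fix a assume a: "a \<in> AA"
  let ?L = "(INF a\<in>AA. dB b (f a) + dX (i a) x')"
  have 1: "?L \<le> (dB b (f a) + dX (i a) x) + dX x x'"
  proof -
    have "?L \<le> dB b (f a) + dX (i a) x'" using a by (rule INF_lower)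
    also have "\<dots> \<le> dB b (f a) + (dX (i a) x + dX x x')"
      by (rule add_left_mono, rule dXt[OF iA[OF a] x x'])
    finally show ?thesis by (simp add: ac_simps)
  qed
  have 2: "?L \<le> (dB b (f a) + dX (i a) x) + D2 x x'"
  proof (rule le_add_D2)
    fix a1 a2 assume a1: "a1 \<in> AA" and a2: "a2 \<in> AA"
    have "?L \<le> dB b (f a2) + dX (i a2) x'" using a2 by (rule INF_lower)
    also have "\<dots> \<le> (dB b (f a) + dB (f a) (f a2)) + dX (i a2) x'"
      by (rule add_right_mono, rule dBt[OF b fA[OF a] fA[OF a2]])
    also have "\<dots> \<le> (dB b (f a) + (dB (f a) (f a1) + dB (f a1) (f a2))) + dX (i a2) x'"
      by (intro add_right_mono add_left_mono dBt[OF fA[OF a] fA[OF a1] fA[OF a2]])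
    also have "\<dots> \<le> (dB b (f a) + ((dX (i a) x + dX x (i a1)) + dB (f a1) (f a2))) + dX (i a2) x'"
      by (intro add_right_mono add_left_mono fle2[OF a a1 x])
    also have "\<dots> = (dB b (f a) + dX (i a) x) + (dX x (i a1) + dB (f a1) (f a2) + dX (i a2) x')"
      by (simp add: ac_simps)
    finally show "?L \<le> (dB b (f a) + dX (i a) x) + (dX x (i a1) + dB (f a1) (f a2) + dX (i a2) x')" .
  qed
  show "?L \<le> (dB b (f a) + dX (i a) x) + min (dX x x') (D2 x x')"
    using 1 2 by (rule le_add_min)
qed

lemma tri_RLL: assumes b: "b \<in> topspace TB" and b': "b' \<in> topspace TB" and x: "x \<in> topspace TX"
  shows "gm (Inr x) (Inl b') \<le> gm (Inr x) (Inl b) + gm (Inl b) (Inl b')"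
  unfolding gamma_po.simps
proof (rule le_INF_add)
  fix a assume a: "a \<in> AA"
  have "(INF a\<in>AA. dX x (i a) + dB (f a) b') \<le> dX x (i a) + dB (f a) b'" using a by (rule INF_lower)
  also have "\<dots> \<le> dX x (i a) + (dB (f a) b + dB b b')"
    by (rule add_left_mono, rule dBt[OF fA[OF a] b b'])
  also have "\<dots> = (dX x (i a) + dB (f a) b) + dB b b'" by (simp add: ac_simps)
  finally show "(INF a\<in>AA. dX x (i a) + dB (f a) b') \<le> (dX x (i a) + dB (f a) b) + dB b b'" .
qed

lemma tri_RLR: assumes b: "b \<in> topspace TB" and x: "x \<in> topspace TX" and x': "x' \<in> topspace TX"
  shows "gm (Inr x) (Inr x') \<le> gm (Inr x) (Inl b) + gm (Inl b) (Inr x')"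
  unfolding gmRR' unfolding gamma_po.simps
proof (rule le_INF_add_INF)
  fix a a' assume a: "a \<in> AA" and a': "a' \<in> AA"
  have "min (dX x x') (D2 x x') \<le> D2 x x'" by simp
  also have "\<dots> \<le> dX x (i a) + dB (f a) (f a') + dX (i a') x'" by (rule D2_le[OF a a'])
  also have "\<dots> \<le> dX x (i a) + (dB (f a) b + dB b (f a')) + dX (i a') x'"
    by (intro add_right_mono add_left_mono dBt[OF fA[OF a] b fA[OF a']])
  also have "\<dots> = (dX x (i a) + dB (f a) b) + (dB b (f a') + dX (i a') x')" by (simp add: ac_simps)
  finally show "min (dX x x') (D2 x x') \<le> (dX x (i a) + dB (f a) b) + (dB b (f a') + dX (i a') x')" .
qed

lemma tri_RRL: assumes b: "b \<in> topspace TB" and x: "x \<in> topspace TX" and x': "x' \<in> topspace TX"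
  shows "gm (Inr x) (Inl b) \<le> gm (Inr x) (Inr x') + gm (Inr x') (Inl b)"
  unfolding gmRR' unfolding gamma_po.simps
proof (rule le_add_INF)
  fix a' assume a': "a' \<in> AA"
  let ?L = "(INF a\<in>AA. dX x (i a) + dB (f a) b)"
  have 1: "?L \<le> dX x x' + (dX x' (i a') + dB (f a') b)"
  proof -
    have "?L \<le> dX x (i a') + dB (f a') b" using a' by (rule INF_lower)
    also have "\<dots> \<le> (dX x x' + dX x' (i a')) + dB (f a') b"
      by (rule add_right_mono, rule dXt[OF x x' iA[OF a']])
    finally show ?thesis by (simp add: ac_simps)
  qed
  have 2: "?L \<le> D2 x x' + (dX x' (i a') + dB (f a') b)"
  proof (rule le_D2_add)
    fix a1 a2 assume a1: "a1 \<in> AA" and a2: "a2 \<in> AA"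
    have "?L \<le> dX x (i a1) + dB (f a1) b" using a1 by (rule INF_lower)
    also have "\<dots> \<le> dX x (i a1) + (dB (f a1) (f a2) + dB (f a2) b)"
      by (rule add_left_mono, rule dBt[OF fA[OF a1] fA[OF a2] b])
    also have "\<dots> \<le> dX x (i a1) + (dB (f a1) (f a2) + (dB (f a2) (f a') + dB (f a') b))"
      by (intro add_left_mono dBt[OF fA[OF a2] fA[OF a'] b])
    also have "\<dots> \<le> dX x (i a1) + (dB (f a1) (f a2) + ((dX (i a2) x' + dX x' (i a')) + dB (f a') b))"
      by (intro add_right_mono add_left_mono fle2[OF a2 a' x'])
    also have "\<dots> = (dX x (i a1) + dB (f a1) (f a2) + dX (i a2) x') + (dX x' (i a') + dB (f a') b)"
      by (simp add: ac_simps)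
    finally show "?L \<le> (dX x (i a1) + dB (f a1) (f a2) + dX (i a2) x') + (dX x' (i a') + dB (f a') b)" .
  qed
  show "?L \<le> min (dX x x') (D2 x x') + (dX x' (i a') + dB (f a') b)"
    using 1 2 by (rule le_min_add)
qed

lemma tri_RRR: assumes x: "x \<in> topspace TX" and x': "x' \<in> topspace TX" and x'': "x'' \<in> topspace TX"
  shows "gm (Inr x) (Inr x'') \<le> gm (Inr x) (Inr x') + gm (Inr x') (Inr x'')"
  unfolding gmRR'
proof -
  let ?L = "min (dX x x'') (D2 x x'')"
  have 1: "?L \<le> dX x x' + dX x' x''"
    using dXt[OF x x' x''] by (rule min.coboundedI1)
  have 2: "?L \<le> dX x x' + D2 x' x''"
  proof (rule le_add_D2)
    fix a1 a2 assume a1: "a1 \<in> AA" and a2: "a2 \<in> AA"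
    have "?L \<le> D2 x x''" by simp
    also have "\<dots> \<le> dX x (i a1) + dB (f a1) (f a2) + dX (i a2) x''" by (rule D2_le[OF a1 a2])
    also have "\<dots> \<le> (dX x x' + dX x' (i a1)) + dB (f a1) (f a2) + dX (i a2) x''"
      by (intro add_right_mono dXt[OF x x' iA[OF a1]])
    also have "\<dots> = dX x x' + (dX x' (i a1) + dB (f a1) (f a2) + dX (i a2) x'')" by (simp add: ac_simps)
    finally show "?L \<le> dX x x' + (dX x' (i a1) + dB (f a1) (f a2) + dX (i a2) x'')" .
  qed
  have 3: "?L \<le> D2 x x' + dX x' x''"
  proof (rule le_D2_add)
    fix a1 a2 assume a1: "a1 \<in> AA" and a2: "a2 \<in> AA"
    have "?L \<le> D2 x x''" by simp
    also have "\<dots> \<le> dX x (i a1) + dB (f a1) (f a2) + dX (i a2) x''" by (rule D2_le[OF a1 a2])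
    also have "\<dots> \<le> dX x (i a1) + dB (f a1) (f a2) + (dX (i a2) x' + dX x' x'')"
      by (intro add_left_mono dXt[OF iA[OF a2] x' x''])
    also have "\<dots> = (dX x (i a1) + dB (f a1) (f a2) + dX (i a2) x') + dX x' x''" by (simp add: ac_simps)
    finally show "?L \<le> (dX x (i a1) + dB (f a1) (f a2) + dX (i a2) x') + dX x' x''" .
  qed
  have 4: "?L \<le> D2 x x' + D2 x' x''"
  proof (rule le_D2_add)
    fix a1 a2 assume a1: "a1 \<in> AA" and a2: "a2 \<in> AA"
    show "?L \<le> (dX x (i a1) + dB (f a1) (f a2) + dX (i a2) x') + D2 x' x''"
    proof (rule le_add_D2)
      fix a3 a4 assume a3: "a3 \<in> AA" and a4: "a4 \<in> AA"
      have "?L \<le> D2 x x''" by simp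
      also have "\<dots> \<le> dX x (i a1) + dB (f a1) (f a4) + dX (i a4) x''" by (rule D2_le[OF a1 a4])
      also have "\<dots> \<le> dX x (i a1) + (dB (f a1) (f a2) + dB (f a2) (f a4)) + dX (i a4) x''"
        by (intro add_right_mono add_left_mono dBt[OF fA[OF a1] fA[OF a2] fA[OF a4]])
      also have "\<dots> \<le> dX x (i a1) + (dB (f a1) (f a2) + (dB (f a2) (f a3) + dB (f a3) (f a4))) + dX (i a4) x''"
        by (intro add_right_mono add_left_mono dBt[OF fA[OF a2] fA[OF a3] fA[OF a4]])
      also have "\<dots> \<le> dX x (i a1) + (dB (f a1) (f a2) + ((dX (i a2) x' + dX x' (i a3)) + dB (f a3) (f a4))) + dX (i a4) x''"
        by (intro add_right_mono add_left_mono fle2[OF a2 a3 x'])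
      also have "\<dots> = (dX x (i a1) + dB (f a1) (f a2) + dX (i a2) x') + (dX x' (i a3) + dB (f a3) (f a4) + dX (i a4) x'')"
        by (simp add: ac_simps)
      finally show "?L \<le> (dX x (i a1) + dB (f a1) (f a2) + dX (i a2) x') + (dX x' (i a3) + dB (f a3) (f a4) + dX (i a4) x'')" .
    qed
  qed
  show "?L \<le> min (dX x x') (D2 x x') + min (dX x' x'') (D2 x' x'')"
    by (intro le_min_add le_add_min 1 2 3 4)
qed

end


lemma cm_fst_fst: "continuous_map (prod_topology (prod_topology X Y) K) X (\<lambda>pk. fst (fst pk))"
  using continuous_map_compose[OF continuous_map_fst continuous_map_fst] by (simp add: o_def)
lemma cm_snd_fst: "continuous_map (prod_topology (prod_topology X Y) K) Y (\<lambda>pk. snd (fst pk))"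
  using continuous_map_compose[OF continuous_map_fst continuous_map_snd] by (simp add: o_def)
lemma cm_g_snd: "continuous_map K Y g \<Longrightarrow> continuous_map (prod_topology P K) Y (\<lambda>pk. g (snd pk))"
  using continuous_map_compose[OF continuous_map_snd] by (simp add: o_def)
lemma cm_g_fst_snd: "continuous_map K Y g \<Longrightarrow> continuous_map (prod_topology P (prod_topology K K')) Y (\<lambda>pk. g (fst (snd pk)))"
  using continuous_map_compose[OF continuous_map_compose[OF continuous_map_snd continuous_map_fst]] by (simp add: o_def)
lemma cm_g_snd_snd: "continuous_map K' Y g \<Longrightarrow> continuous_map (prod_topology P (prod_topology K K')) Y (\<lambda>pk. g (snd (snd pk)))"
  using continuous_map_compose[OF continuous_map_compose[OF continuous_map_snd continuous_map_snd]] by (simp add: o_def)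

context po begin

abbreviation "TZ \<equiv> coprod_top TB TX"
abbreviation "ZZ \<equiv> topspace (coprod_top TB TX)"

lemma dBc: "metric_continuous TB dB" using B unfolding metCH_sep_def by blast
lemma dXc: "metric_continuous TX dX" using X unfolding metCH_sep_def by blast
lemma cpA: "compact_space TA" using A unfolding metCH_sep_def by blast

lemma gm_zero: "z \<in> ZZ \<Longrightarrow> gm z z = 0"
  unfolding topspace_coprod by (auto simp: dB0 dX0)

lemma gm_tri: assumes "z \<in> ZZ" "v \<in> ZZ" "w \<in> ZZ" shows "gm z w \<le> gm z v + gm v w"
proof -
  have P: "\<And>b. Inl b \<in> ZZ \<Longrightarrow> b \<in> topspace TB" "\<And>x. Inr x \<in> ZZ \<Longrightarrow> x \<in> topspace TX"
    unfolding topspace_coprod by auto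
  show ?thesis
  proof (cases z)
    case (Inl b) note z = this
    show ?thesis
    proof (cases v)
      case (Inl b') note v = this
      show ?thesis
      proof (cases w)
        case (Inl b'') then show ?thesis using z v assms P tri_LLL by metis
      next
        case (Inr x) then show ?thesis using z v assms P tri_LLR by metis
      qed
    next
      case (Inr x) note v = this
      show ?thesis
      proof (cases w)
        case (Inl b'') then show ?thesis using z v assms P tri_LRL by metis
      next
        case (Inr x') then show ?thesis using z v assms P tri_LRR by metis
      qed
    qed
  next
    case (Inr x) note z = this
    show ?thesis
    proof (cases v)
      case (Inl b) note v = this
      show ?thesis
      proof (cases w)
        case (Inl b'') then show ?thesis using z v assms P tri_RLL by metis
      next
        case (Inr x') then show ?thesis using z v assms P tri_RLR by metis
      qed
    next
      case (Inr x') note v = this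
      show ?thesis
      proof (cases w)
        case (Inl b'') then show ?thesis using z v assms P tri_RRL by metis
      next
        case (Inr x'') then show ?thesis using z v assms P tri_RRR by metis
      qed
    qed
  qed
qed

lemma gm_le: "gm z w \<le> coprod_met dB dX z w"
  by (cases z; cases w) auto

lemma gm_cont: "metric_continuous TZ gm"
proof -
  have c11: "continuous_map (prod_topology TB TB) upper_ennreal (\<lambda>p. gm (Inl (fst p)) (Inl (snd p)))"
    using metric_cont_comp[OF dBc continuous_map_fst continuous_map_snd] by simp
  have c12: "continuous_map (prod_topology TB TX) upper_ennreal (\<lambda>p. gm (Inl (fst p)) (Inr (snd p)))"
  proof -
    have "continuous_map (prod_topology (prod_topology TB TX) TA) upper_ennreal
        (\<lambda>pk. dB (fst (fst pk)) (f (snd pk)) + dX (i (snd pk)) (snd (fst pk)))"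
      by (intro upper_cont_add metric_cont_comp[OF dBc] metric_cont_comp[OF dXc]
            cm_fst_fst cm_snd_fst cm_g_snd fcont icont)
    from upper_cont_INF[OF cpA, of _ "\<lambda>p k. dB (fst p) (f k) + dX (i k) (snd p)", OF this]
    show ?thesis by simp
  qed
  have c21: "continuous_map (prod_topology TX TB) upper_ennreal (\<lambda>p. gm (Inr (fst p)) (Inl (snd p)))"
  proof -
    have "continuous_map (prod_topology (prod_topology TX TB) TA) upper_ennreal
        (\<lambda>pk. dX (fst (fst pk)) (i (snd pk)) + dB (f (snd pk)) (snd (fst pk)))"
      by (intro upper_cont_add metric_cont_comp[OF dBc] metric_cont_comp[OF dXc]
            cm_fst_fst cm_snd_fst cm_g_snd fcont icont)
    from upper_cont_INF[OF cpA, of _ "\<lambda>p k. dX (fst p) (i k) + dB (f k) (snd p)", OF this]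
    show ?thesis by simp
  qed
  have c22: "continuous_map (prod_topology TX TX) upper_ennreal (\<lambda>p. gm (Inr (fst p)) (Inr (snd p)))"
  proof -
    have cpAA: "compact_space (prod_topology TA TA)" using cpA by (simp add: compact_space_prod_topology)
    have "continuous_map (prod_topology (prod_topology TX TX) (prod_topology TA TA)) upper_ennreal
        (\<lambda>pk. dX (fst (fst pk)) (i (fst (snd pk))) + dB (f (fst (snd pk))) (f (snd (snd pk))) + dX (i (snd (snd pk))) (snd (fst pk)))"
      by (intro upper_cont_add metric_cont_comp[OF dBc] metric_cont_comp[OF dXc]
            cm_fst_fst cm_snd_fst cm_g_fst_snd cm_g_snd_snd fcont icont)
    from upper_cont_INF[OF cpAA, of _ "\<lambda>p k. dX (fst p) (i (fst k)) + dB (f (fst k)) (f (snd k)) + dX (i (snd k)) (snd p)", OF this]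
    have "continuous_map (prod_topology TX TX) upper_ennreal
      (\<lambda>p. INF k\<in>AA \<times> AA. dX (fst p) (i (fst k)) + dB (f (fst k)) (f (snd k)) + dX (i (snd k)) (snd p))"
      by simp
    from upper_cont_min[OF metric_cont_comp[OF dXc continuous_map_fst continuous_map_snd] this]
    show ?thesis unfolding gmRR .
  qed
  show ?thesis unfolding metric_continuous_def case_prod_unfold
    by (rule coprod_upper_cont[OF c11 c12 c21 c22])
qed

lemma gm_submetric: "continuous_submetric TZ (coprod_met dB dX) gm"
  unfolding continuous_submetric_def is_metric_on_def
  using gm_zero gm_tri gm_cont gm_le by blast

end


lemma openin_quot_top:
  "openin (quot_top T \<gamma>) U \<longleftrightarrow> U \<subseteq> qclass (topspace T) \<gamma> ` topspace T \<and>
       openin T {z \<in> topspace T. qclass (topspace T) \<gamma> z \<in> U}"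
  unfolding quot_top_def by (simp add: topology_inverse'[OF istopology_quot])

lemma topspace_quot_top:
  "topspace (quot_top T \<gamma>) = qclass (topspace T) \<gamma> ` topspace T"
proof
  show "topspace (quot_top T \<gamma>) \<subseteq> qclass (topspace T) \<gamma> ` topspace T"
    unfolding topspace_def openin_quot_top by blast
  have "{z \<in> topspace T. qclass (topspace T) \<gamma> z \<in> qclass (topspace T) \<gamma> ` topspace T} = topspace T"
    by blast
  then have "openin (quot_top T \<gamma>) (qclass (topspace T) \<gamma> ` topspace T)"
    unfolding openin_quot_top by simp
  then show "qclass (topspace T) \<gamma> ` topspace T \<subseteq> topspace (quot_top T \<gamma>)"
    by (rule openin_subset)
qed

lemma continuous_map_qclass:
  "continuous_map T (quot_top T \<gamma>) (qclass (topspace T) \<gamma>)"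
  unfolding continuous_map
proof (intro conjI allI impI)
  show "qclass (topspace T) \<gamma> ` topspace T \<subseteq> topspace (quot_top T \<gamma>)"
    unfolding topspace_quot_top by simp
  fix U assume "openin (quot_top T \<gamma>) U"
  then show "openin T {x \<in> topspace T. qclass (topspace T) \<gamma> x \<in> U}"
    unfolding openin_quot_top by blast
qed

lemma closed_zero_set:
  assumes "continuous_map P upper_ennreal \<phi>"
  shows "closedin P {p \<in> topspace P. \<phi> p = 0}"
proof -
  have "topspace P - {p \<in> topspace P. \<phi> p = 0} = {p \<in> topspace P. 0 < \<phi> p}"
    by (auto simp: zero_less_iff_neq_zero)
  moreover have "openin P {p \<in> topspace P. 0 < \<phi> p}" using assms unfolding upper_cont_iff by blast
  ultimately show ?thesis unfolding closedin_def by auto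
qed

lemma closed_le_set:
  assumes "continuous_map P upper_ennreal \<phi>"
  shows "closedin P {p \<in> topspace P. \<phi> p \<le> u}"
proof -
  have "topspace P - {p \<in> topspace P. \<phi> p \<le> u} = {p \<in> topspace P. u < \<phi> p}"
    by (auto simp: not_le)
  moreover have "openin P {p \<in> topspace P. u < \<phi> p}" using assms unfolding upper_cont_iff by blast
  ultimately show ?thesis unfolding closedin_def by auto
qed

locale qs =
  fixes T :: "'z topology" and \<gamma> :: "'z \<Rightarrow> 'z \<Rightarrow> ennreal"
  assumes cpt: "compact_space T" and haus: "Hausdorff_space T"
    and met: "is_metric_on (topspace T) \<gamma>" and mc: "metric_continuous T \<gamma>"
begin

abbreviation "S \<equiv> topspace T"
abbreviation "q \<equiv> qclass (topspace T) \<gamma>"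
abbreviation "TQ \<equiv> quot_top T \<gamma>"
abbreviation "dQ \<equiv> quot_met \<gamma>"

lemma g0: "z \<in> S \<Longrightarrow> \<gamma> z z = 0" using met unfolding is_metric_on_def by blast
lemma gt: "x \<in> S \<Longrightarrow> y \<in> S \<Longrightarrow> z \<in> S \<Longrightarrow> \<gamma> x z \<le> \<gamma> x y + \<gamma> y z"
  using met unfolding is_metric_on_def by blast

lemma gt0: assumes "x \<in> S" "y \<in> S" "z \<in> S" "\<gamma> x y = 0" "\<gamma> y z = 0" shows "\<gamma> x z = 0"
  using gt[OF assms(1-3)] assms(4,5) by simp

lemma mem_self: "z \<in> S \<Longrightarrow> z \<in> q z"
  unfolding qclass_def using g0 by simp

lemma q_sub: "q z \<subseteq> S" unfolding qclass_def by auto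

lemma q_eq: assumes z: "z \<in> S" and w: "w \<in> S"
  shows "q z = q w \<longleftrightarrow> \<gamma> z w = 0 \<and> \<gamma> w z = 0"
proof
  assume "q z = q w"
  then have "w \<in> q z" using mem_self[OF w] by simp
  then show "\<gamma> z w = 0 \<and> \<gamma> w z = 0" unfolding qclass_def by simp
next
  assume h: "\<gamma> z w = 0 \<and> \<gamma> w z = 0"
  show "q z = q w"
  proof (intro set_eqI iffI)
    fix v assume "v \<in> q z"
    then have v: "v \<in> S" "\<gamma> z v = 0" "\<gamma> v z = 0" unfolding qclass_def by auto
    then show "v \<in> q w" unfolding qclass_def using gt0[OF w z v(1)] gt0[OF v(1) z w] h by simp
  next
    fix v assume "v \<in> q w"
    then have v: "v \<in> S" "\<gamma> w v = 0" "\<gamma> v w = 0" unfolding qclass_def by auto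
    then show "v \<in> q z" unfolding qclass_def using gt0[OF z w v(1)] gt0[OF v(1) w z] h by simp
  qed
qed

lemma some_q: assumes z: "z \<in> S"
  shows "(SOME z'. z' \<in> q z) \<in> S" "\<gamma> z (SOME z'. z' \<in> q z) = 0" "\<gamma> (SOME z'. z' \<in> q z) z = 0"
proof -
  have "(SOME z'. z' \<in> q z) \<in> q z" using mem_self[OF z] by (rule someI)
  then show "(SOME z'. z' \<in> q z) \<in> S" "\<gamma> z (SOME z'. z' \<in> q z) = 0" "\<gamma> (SOME z'. z' \<in> q z) z = 0"
    unfolding qclass_def by auto
qed

lemma qmet: assumes z: "z \<in> S" and w: "w \<in> S"
  shows "dQ (q z) (q w) = \<gamma> z w"
proof -
  define z' where "z' = (SOME z'. z' \<in> q z)"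
  define w' where "w' = (SOME w'. w' \<in> q w)"
  note Z = some_q[OF z, folded z'_def] and W = some_q[OF w, folded w'_def]
  have "\<gamma> z' w' \<le> \<gamma> z' z + \<gamma> z w'" by (rule gt[OF Z(1) z W(1)])
  also have "\<dots> \<le> \<gamma> z' z + (\<gamma> z w + \<gamma> w w')" by (intro add_left_mono gt[OF z w W(1)])
  finally have 1: "\<gamma> z' w' \<le> \<gamma> z w" using Z W by simp
  have "\<gamma> z w \<le> \<gamma> z z' + \<gamma> z' w" by (rule gt[OF z Z(1) w])
  also have "\<dots> \<le> \<gamma> z z' + (\<gamma> z' w' + \<gamma> w' w)" by (intro add_left_mono gt[OF Z(1) W(1) w])
  finally have 2: "\<gamma> z w \<le> \<gamma> z' w'" using Z W by simp
  show ?thesis unfolding quot_met_def z'_def[symmetric] w'_def[symmetric] using 1 2 by simp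
qed

definition sat where "sat C = {w \<in> S. \<exists>z\<in>C. \<gamma> z w = 0 \<and> \<gamma> w z = 0}"

lemma Rclosed: "closedin (prod_topology T T) {p \<in> topspace (prod_topology T T). \<gamma> (fst p) (snd p) = 0 \<and> \<gamma> (snd p) (fst p) = 0}"
proof -
  have c1: "continuous_map (prod_topology T T) upper_ennreal (\<lambda>p. \<gamma> (fst p) (snd p))"
    by (rule metric_cont_comp[OF mc continuous_map_fst continuous_map_snd])
  have c2: "continuous_map (prod_topology T T) upper_ennreal (\<lambda>p. \<gamma> (snd p) (fst p))"
    by (rule metric_cont_comp[OF mc continuous_map_snd continuous_map_fst])
  have "{p \<in> topspace (prod_topology T T). \<gamma> (fst p) (snd p) = 0 \<and> \<gamma> (snd p) (fst p) = 0} =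
    {p \<in> topspace (prod_topology T T). \<gamma> (fst p) (snd p) = 0} \<inter> {p \<in> topspace (prod_topology T T). \<gamma> (snd p) (fst p) = 0}"
    by blast
  then show ?thesis using closedin_Int[OF closed_zero_set[OF c1] closed_zero_set[OF c2]] by simp
qed

lemma sat_closed: assumes C: "closedin T C" shows "closedin T (sat C)"
proof -
  let ?R = "{p \<in> topspace (prod_topology T T). \<gamma> (fst p) (snd p) = 0 \<and> \<gamma> (snd p) (fst p) = 0}"
  have "closedin (prod_topology T T) (C \<times> S)"
    using C by (simp add: closedin_prod_Times_iff)
  then have "closedin (prod_topology T T) (?R \<inter> (C \<times> S))" using Rclosed by (intro closedin_Int)
  moreover have "compact_space (prod_topology T T)" using cpt by (simp add: compact_space_prod_topology)
  ultimately have "compactin (prod_topology T T) (?R \<inter> (C \<times> S))" by (intro closedin_compact_space)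
  then have "compactin T (snd ` (?R \<inter> (C \<times> S)))" using continuous_map_snd by (rule image_compactin)
  moreover have "snd ` (?R \<inter> (C \<times> S)) = sat C"
  proof (intro set_eqI iffI)
    fix w assume "w \<in> snd ` (?R \<inter> (C \<times> S))"
    then obtain z where "(z, w) \<in> ?R" "z \<in> C" by force
    then show "w \<in> sat C" unfolding sat_def by auto
  next
    fix w assume "w \<in> sat C"
    then obtain z where "w \<in> S" "z \<in> C" "\<gamma> z w = 0" "\<gamma> w z = 0" unfolding sat_def by blast
    moreover have "z \<in> S" using C \<open>z \<in> C\<close> closedin_subset by blast
    ultimately have "(z, w) \<in> ?R \<inter> (C \<times> S)" by simp
    then show "w \<in> snd ` (?R \<inter> (C \<times> S))" by force
  qed
  ultimately show ?thesis using compactin_imp_closedin[OF haus] by simp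
qed

lemma q_sat: "z \<in> S \<Longrightarrow> q z = sat {z}"
  unfolding qclass_def sat_def by auto

lemma q_closed: "z \<in> S \<Longrightarrow> closedin T (q z)"
  unfolding q_sat using sat_closed closedin_t1_singleton[OF Hausdorff_imp_t1_space[OF haus]] by simp

lemma q_cont: "continuous_map T TQ q" by (rule continuous_map_qclass)

lemma TQ_space: "topspace TQ = q ` S" by (rule topspace_quot_top)

lemma compact_TQ: "compact_space TQ"
  using image_compactin[OF cpt[unfolded compact_space_def] q_cont]
  unfolding compact_space_def TQ_space .

lemma saturated_open:
  assumes U: "openin T U"
  shows "openin T (S - sat (S - U))" "\<And>v v1. v \<in> S \<Longrightarrow> v1 \<in> S - sat (S - U) \<Longrightarrow> q v = q v1 \<Longrightarrow> v \<in> S - sat (S - U)"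
    "S - sat (S - U) \<subseteq> U"
proof -
  have "closedin T (S - U)" using U by (simp add: closedin_diff)
  then have "closedin T (sat (S - U))" by (rule sat_closed)
  then show "openin T (S - sat (S - U))" unfolding closedin_def by blast
  show "S - sat (S - U) \<subseteq> U"
  proof
    fix v assume "v \<in> S - sat (S - U)"
    then have "v \<in> S" "v \<notin> sat (S - U)" by auto
    then show "v \<in> U" unfolding sat_def using g0 by auto
  qed
  fix v v1 assume v: "v \<in> S" and v1: "v1 \<in> S - sat (S - U)" and e: "q v = q v1"
  have v1S: "v1 \<in> S" using v1 by blast
  have h: "\<gamma> v v1 = 0" "\<gamma> v1 v = 0" using q_eq[OF v v1S] e by auto
  show "v \<in> S - sat (S - U)"
  proof (rule ccontr)
    assume "v \<notin> S - sat (S - U)"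
    then have "v \<in> sat (S - U)" using v by blast
    then obtain y where y: "y \<in> S - U" "\<gamma> y v = 0" "\<gamma> v y = 0" unfolding sat_def by blast
    have yS: "y \<in> S" using y(1) by blast
    have "\<gamma> y v1 = 0" using gt0[OF yS v v1S y(2) h(1)] .
    moreover have "\<gamma> v1 y = 0" using gt0[OF v1S v yS h(2) y(3)] .
    ultimately have "v1 \<in> sat (S - U)" unfolding sat_def using v1S y(1) by blast
    then show False using v1 by blast
  qed
qed

lemma haus_TQ: "Hausdorff_space TQ"
  unfolding Hausdorff_space_def
proof (intro allI impI, elim conjE)
  fix c c' assume c: "c \<in> topspace TQ" and c': "c' \<in> topspace TQ" and ne: "c \<noteq> c'"
  obtain z where z: "z \<in> S" "c = q z" using c TQ_space by auto
  obtain w where w: "w \<in> S" "c' = q w" using c' TQ_space by auto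
  have "compactin T (q z)" by (rule closedin_compact_space[OF cpt q_closed[OF z(1)]])
  moreover have "compactin T (q w)" by (rule closedin_compact_space[OF cpt q_closed[OF w(1)]])
  moreover have "disjnt (q z) (q w)"
  proof -
    have "v \<notin> q w" if "v \<in> q z" for v
    proof
      assume "v \<in> q w"
      have vS: "v \<in> S" using that q_sub by blast
      have h1: "\<gamma> z v = 0" "\<gamma> v z = 0" using that unfolding qclass_def by auto
      have h2: "\<gamma> w v = 0" "\<gamma> v w = 0" using \<open>v \<in> q w\<close> unfolding qclass_def by auto
      have "q v = q z" using q_eq[OF vS z(1)] h1 by simp
      moreover have "q v = q w" using q_eq[OF vS w(1)] h2 by simp
      ultimately show False using ne z w by simp
    qed
    then show ?thesis unfolding disjnt_def by blast
  qed
  ultimately obtain U V where UV: "openin T U" "openin T V" "q z \<subseteq> U" "q w \<subseteq> V" "disjnt U V"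
    by (rule Hausdorff_space_compact_separation[OF haus])
  define U' where "U' = S - sat (S - U)"
  define V' where "V' = S - sat (S - V)"
  note SU = saturated_open[OF UV(1), folded U'_def]
  note SV = saturated_open[OF UV(2), folded V'_def]
  have zU': "z \<in> U'"
  proof -
    have "z \<notin> sat (S - U)"
    proof
      assume "z \<in> sat (S - U)"
      then obtain y where "y \<in> S - U" "\<gamma> y z = 0" "\<gamma> z y = 0" unfolding sat_def by blast
      then have "y \<in> q z" unfolding qclass_def by auto
      then show False using UV(3) \<open>y \<in> S - U\<close> by blast
    qed
    then show ?thesis unfolding U'_def using z by blast
  qed
  have wV': "w \<in> V'"
  proof -
    have "w \<notin> sat (S - V)"
    proof
      assume "w \<in> sat (S - V)"
      then obtain y where "y \<in> S - V" "\<gamma> y w = 0" "\<gamma> w y = 0" unfolding sat_def by blast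
      then have "y \<in> q w" unfolding qclass_def by auto
      then show False using UV(4) \<open>y \<in> S - V\<close> by blast
    qed
    then show ?thesis unfolding V'_def using w by blast
  qed
  have pre: "{v \<in> S. q v \<in> q ` W} = W" if "W \<subseteq> S" "\<And>v v1. v \<in> S \<Longrightarrow> v1 \<in> W \<Longrightarrow> q v = q v1 \<Longrightarrow> v \<in> W" for W
    using that by blast
  have U'S: "U' \<subseteq> S" unfolding U'_def by blast
  have V'S: "V' \<subseteq> S" unfolding V'_def by blast
  have oU: "openin TQ (q ` U')"
    unfolding openin_quot_top using U'S pre[OF U'S SU(2)] SU(1) by auto
  have oV: "openin TQ (q ` V')"
    unfolding openin_quot_top using V'S pre[OF V'S SV(2)] SV(1) by auto
  have dj: "disjnt (q ` U') (q ` V')"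
  proof -
    have False if "v1 \<in> U'" "v2 \<in> V'" "q v1 = q v2" for v1 v2
    proof -
      have "v1 \<in> V'" using SV(2)[of v1 v2] that U'S by blast
      then show False using that(1) SU(3) SV(3) UV(5) unfolding disjnt_def by blast
    qed
    then show ?thesis unfolding disjnt_def by blast
  qed
  show "\<exists>U V. openin TQ U \<and> openin TQ V \<and> c \<in> U \<and> c' \<in> V \<and> disjnt U V"
    using oU oV dj zU' wV' z(2) w(2) by blast
qed

lemma dQ_metric: "is_metric_on (topspace TQ) dQ"
  unfolding is_metric_on_def TQ_space
proof (intro conjI ballI)
  fix c assume "c \<in> q ` S"
  then obtain z where z: "z \<in> S" "c = q z" by blast
  show "dQ c c = 0" unfolding z(2) qmet[OF z(1) z(1)] by (rule g0[OF z(1)])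
next
  fix c1 c2 c3 assume "c1 \<in> q ` S" "c2 \<in> q ` S" "c3 \<in> q ` S"
  then obtain z1 z2 z3 where z: "z1 \<in> S" "c1 = q z1" "z2 \<in> S" "c2 = q z2" "z3 \<in> S" "c3 = q z3" by blast
  show "dQ c1 c3 \<le> dQ c1 c2 + dQ c2 c3"
    unfolding z(2,4,6) qmet[OF z(1) z(3)] qmet[OF z(1) z(5)] qmet[OF z(3) z(5)] by (rule gt[OF z(1,3,5)])
qed

lemma dQ_sep: "\<forall>x\<in>topspace TQ. \<forall>y\<in>topspace TQ. dQ x y = 0 \<and> dQ y x = 0 \<longrightarrow> x = y"
  unfolding TQ_space
proof (intro ballI impI)
  fix c1 c2 assume "c1 \<in> q ` S" "c2 \<in> q ` S" and h: "dQ c1 c2 = 0 \<and> dQ c2 c1 = 0"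
  then obtain z1 z2 where z: "z1 \<in> S" "c1 = q z1" "z2 \<in> S" "c2 = q z2" by blast
  show "c1 = c2" using h unfolding z(2,4) qmet[OF z(1) z(3)] qmet[OF z(3) z(1)] q_eq[OF z(1) z(3)] .
qed

lemma dQ_cont: "metric_continuous TQ dQ"
  unfolding metric_continuous_def upper_cont_iff
proof
  fix u :: ennreal
  let ?F = "{p \<in> topspace (prod_topology T T). \<gamma> (fst p) (snd p) \<le> u}"
  let ?m = "\<lambda>p. (q (fst p), q (snd p))"
  have cm: "continuous_map (prod_topology T T) (prod_topology TQ TQ) ?m"
    by (intro continuous_map_pairedI continuous_map_compose[OF continuous_map_fst q_cont, unfolded o_def]
        continuous_map_compose[OF continuous_map_snd q_cont, unfolded o_def])
  have "closedin (prod_topology T T) ?F"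
    by (rule closed_le_set[OF metric_cont_comp[OF mc continuous_map_fst continuous_map_snd]])
  moreover have "compact_space (prod_topology T T)" using cpt by (simp add: compact_space_prod_topology)
  ultimately have "compactin (prod_topology T T) ?F" by (intro closedin_compact_space)
  then have "compactin (prod_topology TQ TQ) (?m ` ?F)" using cm by (rule image_compactin)
  moreover have "Hausdorff_space (prod_topology TQ TQ)" using haus_TQ by (simp add: Hausdorff_space_prod_topology)
  ultimately have cl: "closedin (prod_topology TQ TQ) (?m ` ?F)" using compactin_imp_closedin by blast
  have inF: "(z, w) \<in> ?F \<longleftrightarrow> \<gamma> z w \<le> u" if "z \<in> S" "w \<in> S" for z w
    using that by simp
  have rep: "\<exists>z w. z \<in> S \<and> w \<in> S \<and> p = (q z, q w)" if "p \<in> topspace (prod_topology TQ TQ)" for p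
  proof -
    obtain c c' where p: "p = (c, c')" by (cases p)
    have "c \<in> q ` S" "c' \<in> q ` S" using that unfolding p TQ_space[symmetric] by simp_all
    then obtain z w where "z \<in> S" "c = q z" "w \<in> S" "c' = q w" by blast
    then show ?thesis unfolding p by blast
  qed
  have mem: "p \<in> ?m ` ?F \<longleftrightarrow> \<gamma> z w \<le> u" if zw: "z \<in> S" "w \<in> S" "p = (q z, q w)" for p z w
  proof
    assume "p \<in> ?m ` ?F"
    then obtain z' w' where zw': "(z', w') \<in> ?F" "p = (q z', q w')" by auto
    have z'w': "z' \<in> S" "w' \<in> S" "\<gamma> z' w' \<le> u" using zw'(1) by simp_all
    have "q z' = q z" "q w' = q w" using zw'(2) zw(3) by simp_all
    then have "dQ (q z) (q w) = \<gamma> z' w'" using qmet[OF z'w'(1,2)] by simp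
    then show "\<gamma> z w \<le> u" using qmet[OF zw(1,2)] z'w'(3) by simp
  next
    assume "\<gamma> z w \<le> u"
    then have "(z, w) \<in> ?F" using zw(1,2) by simp
    then have "?m (z, w) \<in> ?m ` ?F" by (rule imageI)
    then show "p \<in> ?m ` ?F" using zw(3) by simp
  qed
  have eq: "topspace (prod_topology TQ TQ) - ?m ` ?F = {p \<in> topspace (prod_topology TQ TQ). u < (\<lambda>(x, y). dQ x y) p}"
  proof (intro set_eqI iffI)
    fix p assume p: "p \<in> topspace (prod_topology TQ TQ) - ?m ` ?F"
    then obtain z w where zw: "z \<in> S" "w \<in> S" "p = (q z, q w)" using rep by blast
    have "\<not> \<gamma> z w \<le> u" using mem[OF zw] p by blast
    then have "u < dQ (q z) (q w)" using qmet[OF zw(1,2)] by (simp add: not_le)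
    then show "p \<in> {p \<in> topspace (prod_topology TQ TQ). u < (\<lambda>(x, y). dQ x y) p}"
      using p zw(3) by simp
  next
    fix p assume p: "p \<in> {p \<in> topspace (prod_topology TQ TQ). u < (\<lambda>(x, y). dQ x y) p}"
    then have pt: "p \<in> topspace (prod_topology TQ TQ)" by blast
    then obtain z w where zw: "z \<in> S" "w \<in> S" "p = (q z, q w)" using rep by blast
    have "u < dQ (q z) (q w)" using p zw(3) by simp
    then have "\<not> \<gamma> z w \<le> u" using qmet[OF zw(1,2)] by (simp add: not_le)
    then have "p \<notin> ?m ` ?F" using mem[OF zw] by blast
    then show "p \<in> topspace (prod_topology TQ TQ) - ?m ` ?F" using pt by blast
  qed
  have "openin (prod_topology TQ TQ) (topspace (prod_topology TQ TQ) - ?m ` ?F)"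
    using cl unfolding closedin_def by blast
  then show "openin (prod_topology TQ TQ) {p \<in> topspace (prod_topology TQ TQ). u < (\<lambda>(x, y). dQ x y) p}"
    unfolding eq .
qed

lemma metCH_TQ: "metCH_sep TQ dQ"
  unfolding metCH_sep_def by (intro conjI compact_TQ haus_TQ dQ_metric dQ_sep dQ_cont)

end


context po begin

lemma TZ_qs: "qs TZ gm"
proof
  have cB: "compact_space TB" and hB: "Hausdorff_space TB" using B unfolding metCH_sep_def by simp_all
  have cX: "compact_space TX" and hX: "Hausdorff_space TX" using X unfolding metCH_sep_def by simp_all
  show "compact_space TZ" by (rule compact_coprod[OF cB cX])
  show "Hausdorff_space TZ" by (rule Hausdorff_coprod[OF hB hX])
  have "is_metric_on ZZ gm \<and> metric_continuous TZ gm"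
    using gm_submetric unfolding continuous_submetric_def by simp
  then show "is_metric_on ZZ gm" "metric_continuous TZ gm" by simp_all
qed

abbreviation "qq \<equiv> qclass ZZ gm"
abbreviation "TQQ \<equiv> quot_top TZ gm"
abbreviation "dQQ \<equiv> quot_met gm"

lemma jB_morph: "met_morphism TB dB TQQ dQQ (\<lambda>b. qq (Inl b))"
  unfolding met_morphism_def
proof (intro conjI ballI)
  show "continuous_map TB TQQ (\<lambda>b. qq (Inl b))"
    using continuous_map_compose[OF continuous_map_Inl qs.q_cont[OF TZ_qs]] by (simp add: o_def)
  fix b b' assume b: "b \<in> topspace TB" and b': "b' \<in> topspace TB"
  have "Inl b \<in> ZZ" "Inl b' \<in> ZZ" using b b' unfolding topspace_coprod by auto
  then show "dQQ (qq (Inl b)) (qq (Inl b')) \<le> dB b b'" using qs.qmet[OF TZ_qs] by simp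
qed

lemma jX_morph: "met_morphism TX dX TQQ dQQ (\<lambda>x. qq (Inr x))"
  unfolding met_morphism_def
proof (intro conjI ballI)
  show "continuous_map TX TQQ (\<lambda>x. qq (Inr x))"
    using continuous_map_compose[OF continuous_map_Inr qs.q_cont[OF TZ_qs]] by (simp add: o_def)
  fix x x' assume x: "x \<in> topspace TX" and x': "x' \<in> topspace TX"
  have "Inr x \<in> ZZ" "Inr x' \<in> ZZ" using x x' unfolding topspace_coprod by auto
  then show "dQQ (qq (Inr x)) (qq (Inr x')) \<le> dX x x'" using qs.qmet[OF TZ_qs] by simp
qed

lemma glue: assumes a: "a \<in> AA" shows "qq (Inl (f a)) = qq (Inr (i a))"
proof -
  have z: "Inl (f a) \<in> ZZ" "Inr (i a) \<in> ZZ" using fA[OF a] iA[OF a] unfolding topspace_coprod by auto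
  have "gm (Inl (f a)) (Inr (i a)) \<le> dB (f a) (f a) + dX (i a) (i a)"
    unfolding gamma_po.simps using a by (rule INF_lower)
  then have 1: "gm (Inl (f a)) (Inr (i a)) = 0" using dB0[OF fA[OF a]] dX0[OF iA[OF a]] by simp
  have "gm (Inr (i a)) (Inl (f a)) \<le> dX (i a) (i a) + dB (f a) (f a)"
    unfolding gamma_po.simps using a by (rule INF_lower)
  then have 2: "gm (Inr (i a)) (Inl (f a)) = 0" using dB0[OF fA[OF a]] dX0[OF iA[OF a]] by simp
  show ?thesis using qs.q_eq[OF TZ_qs z] 1 2 by simp
qed

lemma universal:
  fixes TY :: "'y topology" and dY g h
  assumes Y: "metCH_sep TY dY" and g: "met_morphism TB dB TY dY g" and h: "met_morphism TX dX TY dY h"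
    and gh: "\<forall>a\<in>AA. g (f a) = h (i a)"
  shows "\<exists>u. met_morphism TQQ dQQ TY dY u \<and>
               (\<forall>b\<in>topspace TB. u (qq (Inl b)) = g b) \<and> (\<forall>x\<in>topspace TX. u (qq (Inr x)) = h x) \<and>
               (\<forall>u'. met_morphism TQQ dQQ TY dY u' \<and>
                  (\<forall>b\<in>topspace TB. u' (qq (Inl b)) = g b) \<and> (\<forall>x\<in>topspace TX. u' (qq (Inr x)) = h x) \<longrightarrow>
                  (\<forall>q\<in>topspace TQQ. u' q = u q))"
proof -
  let ?U = "case_sum g h"
  have gc: "continuous_map TB TY g" using g unfolding met_morphism_def by blast
  have hc: "continuous_map TX TY h" using h unfolding met_morphism_def by blast
  have Uc: "continuous_map TZ TY ?U" by (rule continuous_map_coprod[OF gc hc])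
  have gT: "\<And>b. b \<in> topspace TB \<Longrightarrow> g b \<in> topspace TY" using continuous_map_funspace[OF gc] by (rule funcset_mem)
  have hT: "\<And>x. x \<in> topspace TX \<Longrightarrow> h x \<in> topspace TY" using continuous_map_funspace[OF hc] by (rule funcset_mem)
  have UT: "\<And>z. z \<in> ZZ \<Longrightarrow> ?U z \<in> topspace TY" using continuous_map_funspace[OF Uc] by (rule funcset_mem)
  have gl: "\<And>b b'. b \<in> topspace TB \<Longrightarrow> b' \<in> topspace TB \<Longrightarrow> dY (g b) (g b') \<le> dB b b'"
    using g unfolding met_morphism_def by (elim conjE) blast
  have hl: "\<And>x x'. x \<in> topspace TX \<Longrightarrow> x' \<in> topspace TX \<Longrightarrow> dY (h x) (h x') \<le> dX x x'"
    using h unfolding met_morphism_def by (elim conjE) blast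
  have dYt: "\<And>y1 y2 y3. y1 \<in> topspace TY \<Longrightarrow> y2 \<in> topspace TY \<Longrightarrow> y3 \<in> topspace TY \<Longrightarrow> dY y1 y3 \<le> dY y1 y2 + dY y2 y3"
    using Y unfolding metCH_sep_def is_metric_on_def by (elim conjE) blast
  have sepY: "\<forall>x\<in>topspace TY. \<forall>y\<in>topspace TY. dY x y = 0 \<and> dY y x = 0 \<longrightarrow> x = y"
    using Y unfolding metCH_sep_def by (elim conjE) assumption
  have Ule: "dY (?U z) (?U w) \<le> gm z w" if z: "z \<in> ZZ" and w: "w \<in> ZZ" for z w
  proof (cases z)
    case (Inl b) note zb = this
    have b: "b \<in> topspace TB" using z zb unfolding topspace_coprod by auto
    show ?thesis
    proof (cases w)
      case (Inl b')
      have b': "b' \<in> topspace TB" using w Inl unfolding topspace_coprod by auto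
      show ?thesis using zb Inl gl[OF b b'] by simp
    next
      case (Inr x)
      have x: "x \<in> topspace TX" using w Inr unfolding topspace_coprod by auto
      have "dY (g b) (h x) \<le> (INF a\<in>AA. dB b (f a) + dX (i a) x)"
      proof (rule INF_greatest)
        fix a assume a: "a \<in> AA"
        have "dY (g b) (h x) \<le> dY (g b) (g (f a)) + dY (g (f a)) (h x)"
          by (rule dYt[OF gT[OF b] gT[OF fA[OF a]] hT[OF x]])
        also have "\<dots> = dY (g b) (g (f a)) + dY (h (i a)) (h x)" using gh a by simp
        also have "\<dots> \<le> dB b (f a) + dX (i a) x"
          by (intro add_mono gl[OF b fA[OF a]] hl[OF iA[OF a] x])
        finally show "dY (g b) (h x) \<le> dB b (f a) + dX (i a) x" .
      qed
      then show ?thesis using zb Inr by simp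
    qed
  next
    case (Inr x) note zx = this
    have x: "x \<in> topspace TX" using z zx unfolding topspace_coprod by auto
    show ?thesis
    proof (cases w)
      case (Inl b)
      have b: "b \<in> topspace TB" using w Inl unfolding topspace_coprod by auto
      have "dY (h x) (g b) \<le> (INF a\<in>AA. dX x (i a) + dB (f a) b)"
      proof (rule INF_greatest)
        fix a assume a: "a \<in> AA"
        have "dY (h x) (g b) \<le> dY (h x) (h (i a)) + dY (h (i a)) (g b)"
          by (rule dYt[OF hT[OF x] hT[OF iA[OF a]] gT[OF b]])
        also have "\<dots> = dY (h x) (h (i a)) + dY (g (f a)) (g b)" using gh a by simp
        also have "\<dots> \<le> dX x (i a) + dB (f a) b"
          by (intro add_mono hl[OF x iA[OF a]] gl[OF fA[OF a] b])
        finally show "dY (h x) (g b) \<le> dX x (i a) + dB (f a) b" .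
      qed
      then show ?thesis using zx Inl by simp
    next
      case (Inr x')
      have x': "x' \<in> topspace TX" using w Inr unfolding topspace_coprod by auto
      have 1: "dY (h x) (h x') \<le> dX x x'" by (rule hl[OF x x'])
      have 2: "dY (h x) (h x') \<le> D2 x x'"
        unfolding D2_def
      proof (rule INF_greatest)
        fix p assume p: "p \<in> AA \<times> AA"
        then have a1: "fst p \<in> AA" and a2: "snd p \<in> AA" by auto
        have "dY (h x) (h x') \<le> dY (h x) (h (i (fst p))) + dY (h (i (fst p))) (h x')"
          by (rule dYt[OF hT[OF x] hT[OF iA[OF a1]] hT[OF x']])
        also have "\<dots> \<le> dY (h x) (h (i (fst p))) + (dY (h (i (fst p))) (h (i (snd p))) + dY (h (i (snd p))) (h x'))"
          by (intro add_left_mono dYt[OF hT[OF iA[OF a1]] hT[OF iA[OF a2]] hT[OF x']])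
        also have "\<dots> = dY (h x) (h (i (fst p))) + (dY (g (f (fst p))) (g (f (snd p))) + dY (h (i (snd p))) (h x'))"
          using gh a1 a2 by simp
        also have "\<dots> \<le> dX x (i (fst p)) + (dB (f (fst p)) (f (snd p)) + dX (i (snd p)) x')"
          by (intro add_mono hl[OF x iA[OF a1]] gl[OF fA[OF a1] fA[OF a2]] hl[OF iA[OF a2] x'])
        also have "\<dots> = dX x (i (fst p)) + dB (f (fst p)) (f (snd p)) + dX (i (snd p)) x'"
          by (simp add: ac_simps)
        finally show "dY (h x) (h x') \<le> dX x (i (fst p)) + dB (f (fst p)) (f (snd p)) + dX (i (snd p)) x'" .
      qed
      have "gm (Inr x) (Inr x') = min (dX x x') (D2 x x')" by (rule gmRR')
      then show ?thesis using zx Inr 1 2 by simp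
    qed
  qed
  define u where "u c = ?U (SOME z. z \<in> c)" for c
  have uq: "u (qq z) = ?U z" if z: "z \<in> ZZ" for z
  proof -
    note S = qs.some_q[OF TZ_qs z]
    let ?z' = "SOME z'. z' \<in> qq z"
    have "dY (?U ?z') (?U z) = 0" using Ule[OF S(1) z] S(3) by simp
    moreover have "dY (?U z) (?U ?z') = 0" using Ule[OF z S(1)] S(2) by simp
    ultimately have "?U ?z' = ?U z" by (intro sepY[rule_format, OF UT[OF S(1)] UT[OF z]] conjI)
    then show ?thesis unfolding u_def .
  qed
  have TQs: "topspace TQQ = qq ` ZZ" by (rule qs.TQ_space[OF TZ_qs])
  have uc: "continuous_map TQQ TY u"
    unfolding continuous_map
  proof (intro conjI allI impI)
    show "u ` topspace TQQ \<subseteq> topspace TY" unfolding TQs using uq UT by auto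
    fix V assume V: "openin TY V"
    have "{z \<in> ZZ. qq z \<in> {c \<in> topspace TQQ. u c \<in> V}} = {z \<in> ZZ. ?U z \<in> V}"
      unfolding TQs using uq by auto
    moreover have "openin TZ {z \<in> ZZ. ?U z \<in> V}" by (rule openin_continuous_map_preimage[OF Uc V])
    ultimately have o: "openin TZ {z \<in> ZZ. qq z \<in> {c \<in> topspace TQQ. u c \<in> V}}" by simp
    have sub: "{c \<in> topspace TQQ. u c \<in> V} \<subseteq> qq ` ZZ" using TQs by blast
    show "openin TQQ {c \<in> topspace TQQ. u c \<in> V}"
      unfolding openin_quot_top using o sub by blast
  qed
  have ul: "dY (u c) (u c') \<le> dQQ c c'" if c: "c \<in> topspace TQQ" and c': "c' \<in> topspace TQQ" for c c'
  proof -
    obtain z where z: "z \<in> ZZ" "c = qq z" using c TQs by auto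
    obtain w where w: "w \<in> ZZ" "c' = qq w" using c' TQs by auto
    show ?thesis using Ule[OF z(1) w(1)] uq[OF z(1)] uq[OF w(1)] qs.qmet[OF TZ_qs z(1) w(1)] z w by simp
  qed
  have um: "met_morphism TQQ dQQ TY dY u" unfolding met_morphism_def using uc ul by blast
  have uB: "\<forall>b\<in>topspace TB. u (qq (Inl b)) = g b" using uq unfolding topspace_coprod by auto
  have uX: "\<forall>x\<in>topspace TX. u (qq (Inr x)) = h x" using uq unfolding topspace_coprod by auto
  have uniq: "\<forall>q\<in>topspace TQQ. u' q = u q"
    if "(\<forall>b\<in>topspace TB. u' (qq (Inl b)) = g b) \<and> (\<forall>x\<in>topspace TX. u' (qq (Inr x)) = h x)" for u'
  proof
    fix c assume "c \<in> topspace TQQ"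
    then obtain z where z: "z \<in> ZZ" "c = qq z" using TQs by auto
    show "u' c = u c"
    proof (cases z)
      case (Inl b)
      then have "b \<in> topspace TB" using z unfolding topspace_coprod by auto
      then show ?thesis using that uB z Inl by simp
    next
      case (Inr x)
      then have "x \<in> topspace TX" using z unfolding topspace_coprod by auto
      then show ?thesis using that uX z Inr by simp
    qed
  qed
  show ?thesis
  proof (rule exI[of _ u], intro conjI allI impI)
    show "met_morphism TQQ dQQ TY dY u" by (rule um)
    show "\<forall>b\<in>topspace TB. u (qq (Inl b)) = g b" by (rule uB)
    show "\<forall>x\<in>topspace TX. u (qq (Inr x)) = h x" by (rule uX)
    fix u' assume "met_morphism TQQ dQQ TY dY u' \<and> (\<forall>b\<in>topspace TB. u' (qq (Inl b)) = g b) \<and> (\<forall>x\<in>topspace TX. u' (qq (Inr x)) = h x)"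
    then have "(\<forall>b\<in>topspace TB. u' (qq (Inl b)) = g b) \<and> (\<forall>x\<in>topspace TX. u' (qq (Inr x)) = h x)" by (rule conjunct2)
    then show "\<forall>q\<in>topspace TQQ. u' q = u q" by (rule uniq)
  qed
qed

end


theorem proposition4p1:
  fixes TA :: "'a topology" and dA :: "'a \<Rightarrow> 'a \<Rightarrow> ennreal"
    and TB :: "'b topology" and dB :: "'b \<Rightarrow> 'b \<Rightarrow> ennreal"
    and TX :: "'x topology" and dX :: "'x \<Rightarrow> 'x \<Rightarrow> ennreal"
    and i :: "'a \<Rightarrow> 'x" and f :: "'a \<Rightarrow> 'b"
  assumes A: "metCH_sep TA dA" and B: "metCH_sep TB dB" and X: "metCH_sep TX dX"
    and i: "met_embedding TA dA TX dX i"
    and f: "met_morphism TA dA TB dB f"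
  defines "\<gamma> \<equiv> gamma_po (topspace TA) dA dB dX f i"
    and "TZ \<equiv> coprod_top TB TX"
    and "TQ \<equiv> quot_top (coprod_top TB TX) (gamma_po (topspace TA) dA dB dX f i)"
    and "dQ \<equiv> quot_met (gamma_po (topspace TA) dA dB dX f i)"
    and "jB \<equiv> (\<lambda>b. qclass (topspace (coprod_top TB TX)) (gamma_po (topspace TA) dA dB dX f i) (Inl b))"
    and "jX \<equiv> (\<lambda>x. qclass (topspace (coprod_top TB TX)) (gamma_po (topspace TA) dA dB dX f i) (Inr x))"
  shows "continuous_submetric TZ (coprod_met dB dX) \<gamma>
    \<and> metCH_sep TQ dQ
    \<and> met_morphism TB dB TQ dQ jB
    \<and> met_morphism TX dX TQ dQ jX
    \<and> (\<forall>a\<in>topspace TA. jB (f a) = jX (i a))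
    \<and> (\<forall>(TY :: 'y topology) dY g h.
          metCH_sep TY dY \<and> met_morphism TB dB TY dY g \<and> met_morphism TX dX TY dY h \<and>
          (\<forall>a\<in>topspace TA. g (f a) = h (i a)) \<longrightarrow>
          (\<exists>u. met_morphism TQ dQ TY dY u \<and>
               (\<forall>b\<in>topspace TB. u (jB b) = g b) \<and> (\<forall>x\<in>topspace TX. u (jX x) = h x) \<and>
               (\<forall>u'. met_morphism TQ dQ TY dY u' \<and>
                  (\<forall>b\<in>topspace TB. u' (jB b) = g b) \<and> (\<forall>x\<in>topspace TX. u' (jX x) = h x) \<longrightarrow>
                  (\<forall>q\<in>topspace TQ. u' q = u q))))"
proof -
  interpret P: po TA dA TB dB TX dX i f using A B X i f by unfold_locales
  have 1: "continuous_submetric TZ (coprod_met dB dX) \<gamma>"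
    unfolding \<gamma>_def TZ_def by (rule P.gm_submetric)
  have 2: "metCH_sep TQ dQ"
    unfolding TQ_def dQ_def by (rule qs.metCH_TQ[OF P.TZ_qs])
  have 3: "met_morphism TB dB TQ dQ jB"
    unfolding TQ_def dQ_def jB_def by (rule P.jB_morph)
  have 4: "met_morphism TX dX TQ dQ jX"
    unfolding TQ_def dQ_def jX_def by (rule P.jX_morph)
  have 5: "\<forall>a\<in>topspace TA. jB (f a) = jX (i a)"
  proof
    fix a assume "a \<in> topspace TA"
    then show "jB (f a) = jX (i a)" unfolding jB_def jX_def by (rule P.glue)
  qed
  have 6: "\<forall>(TY :: 'y topology) dY g h.
          metCH_sep TY dY \<and> met_morphism TB dB TY dY g \<and> met_morphism TX dX TY dY h \<and>
          (\<forall>a\<in>topspace TA. g (f a) = h (i a)) \<longrightarrow>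
          (\<exists>u. met_morphism TQ dQ TY dY u \<and>
               (\<forall>b\<in>topspace TB. u (jB b) = g b) \<and> (\<forall>x\<in>topspace TX. u (jX x) = h x) \<and>
               (\<forall>u'. met_morphism TQ dQ TY dY u' \<and>
                  (\<forall>b\<in>topspace TB. u' (jB b) = g b) \<and> (\<forall>x\<in>topspace TX. u' (jX x) = h x) \<longrightarrow>
                  (\<forall>q\<in>topspace TQ. u' q = u q)))"
  proof (intro allI impI, elim conjE)
    fix TY :: "'y topology" and dY g h
    assume "metCH_sep TY dY" "met_morphism TB dB TY dY g" "met_morphism TX dX TY dY h"
      "\<forall>a\<in>topspace TA. g (f a) = h (i a)"
    from P.universal[OF this] show "\<exists>u. met_morphism TQ dQ TY dY u \<and>
               (\<forall>b\<in>topspace TB. u (jB b) = g b) \<and> (\<forall>x\<in>topspace TX. u (jX x) = h x) \<and>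
               (\<forall>u'. met_morphism TQ dQ TY dY u' \<and>
                  (\<forall>b\<in>topspace TB. u' (jB b) = g b) \<and> (\<forall>x\<in>topspace TX. u' (jX x) = h x) \<longrightarrow>
                  (\<forall>q\<in>topspace TQ. u' q = u q))"
      unfolding TQ_def dQ_def jB_def jX_def .
  qed
  show ?thesis by (rule conjI[OF 1 conjI[OF 2 conjI[OF 3 conjI[OF 4 conjI[OF 5 6]]]]])
qed


end
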